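(* Let $w\in W$, $i\in\{1,\ldots,r\}$, $n=\ell(w)$, and let $e=(0,\ldots,0,n,0,\ldots,0)$ be the $r$-tuple with $n$ in position $i$. The following are equivalent: (1) $C_{w,e}=1$; (2) $(\Phi^+\cap w\Phi^-,e)$ is an excessive cluster; (3) $(\Phi^+\cap w\Phi^-,e)$ is an excessively clusterizable A-configuration; (4) there is a path-originating sequence $0=\beta_0,\beta_1,\ldots,\beta_n$ with $\beta_1=\alpha_i$ (if $n>0$) and $\Phi^+\cap w\Phi^-=\{\beta_1,\ldots,\beta_n\}$; (5) there is a path-originating sequence $0=\beta_0,\beta_1,\ldots,\beta_n$ with $\beta_1=\alpha_i$ (if $n>0$) and $w=\sigma_{\beta_n}\cdots\sigma_{\beta_1}$. Moreover, the sequences in (4) and (5) are unique and coincide.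
   Context: Standard setup: $G$ is a simple algebraic group over $\mathbb C$ with simply laced Dynkin diagram, of rank $r$; $B$ a Borel subgroup, fixed maximal torus. $\Phi$ the roots, $\Phi^+$ positive roots, $\Phi^-=-\Phi^+$, $\Pi=\{\alpha_1,\ldots,\alpha_r\}$ simple roots, $W$ Weyl group, $\sigma_\alpha$ reflections, $\ell$ length, $w_0$ longest element; scalar product normalized with $(\alpha,\alpha)=2$. $Z_w$ is the Chow class of $\overline{Bw_0w^{-1}B/B}\subseteq G/B$, $D_i=Z_{\sigma_{\alpha_i}}$, and $D_1^{n_1}\cdots D_r^{n_r}=\sum_w C_{w,n_1,\ldots,n_r}Z_w$. $\mathrm{supp}\,v$ for $v=\sum a_j\alpha_j$ is $\{\alpha_j:a_j\ne0\}$. For $A\subseteq\Phi^+$ and $I\subseteq\{1,\ldots,r\}$, $R_I(A)$ is the set of $\alpha\in A$ whose support contains some $\alpha_j$, $j\in I$. An A-configuration is $(A,n_1,\ldots,n_r)$ with $A\subseteq\Phi^+$, $n_j\in\mathbb Z_{\ge0}$, $\sum n_j=|A|$. A set $A\subseteq\Phi^+$ is an $I$-cluster if: (1) coefficients of $\alpha_j$, $j\in I$, in elements of $A$ are $\le1$; (2) $(\alpha,\beta)\ne-1$ for distinct $\alpha,\beta\in A$; (3) if $\alpha,\beta\in A$, $(\alpha,\beta)=0$, then $\mathrm{supp}\,\alpha\cap\mathrm{supp}\,\beta$ contains no $\alpha_j$ with $j\in I$. With $I=\{j:n_j>0\}$, $(A,n)$ is excessive if $|R_I(A)|=\sum n_j$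 and $|R_J(A)|>\sum_{j\in J}n_j$ for all nonempty $J\subsetneq I$; it is an excessive cluster if moreover $A$ is an $I$-cluster. Excessively clusterizable (recursively on $|A|$): $(\varnothing,0,\ldots,0)$ is; for $|A|>0$, $(A,n)$ is if there is nonempty $I$ with $n_j>0$ for $j\in I$ such that with $k_j=n_j$ ($j\in I$), $k_j=0$ otherwise, $|R_I(A)|=\sum k_j$, $(R_I(A),k)$ is an excessive cluster and $(A\setminus R_I(A),n-k)$ is excessively clusterizable. A sequence $0=\beta_0,\beta_1,\ldots,\beta_k$ with $\beta_1,\ldots,\beta_k\in\Phi^+$ is path-originating if each $\beta_j-\beta_{j-1}$ is a simple root $\alpha_{i_j}$ ($1\le j\le k$), with $(\alpha_{i_j},\alpha_{i_{j+1}})=-1$ and $(\alpha_{i_j},\alpha_{i_{j'}})=0$ whenever $|j-j'|>1$ (equivalently, $i_1,\ldots,i_k$ is a simple path in the Dynkin diagram and $\beta_j=\alpha_{i_1}+\cdots+\alpha_{i_j}$). *)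

theory Defs
  imports Main
begin

text \<open>Root lattice vectors: coordinates with respect to the simple roots
  alpha_0, ..., alpha_(r-1) (0-based indexing of simple roots).
  A Cartan matrix A (indices below r) determines the scalar product.\<close>

type_synonym vec = "nat \<Rightarrow> int"
type_synonym weyl = "vec \<Rightarrow> vec"

definition simple :: "nat \<Rightarrow> vec" where
  "simple i = (\<lambda>j. if j = i then 1 else 0)"

definition form :: "nat \<Rightarrow> (nat \<Rightarrow> nat \<Rightarrow> int) \<Rightarrow> vec \<Rightarrow> vec \<Rightarrow> int" where
  "form r A u v = (\<Sum>j<r. \<Sum>k<r. u j * A j k * v k)"

definition simply_laced_cartan :: "nat \<Rightarrow> (nat \<Rightarrow> nat \<Rightarrow> int) \<Rightarrow> bool" where
  "simply_laced_cartan r A \<longleftrightarrow>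
     r \<ge> 1 \<and>
     (\<forall>i<r. A i i = 2) \<and>
     (\<forall>i<r. \<forall>j<r. A i j = A j i) \<and>
     (\<forall>i<r. \<forall>j<r. i \<noteq> j \<longrightarrow> A i j = 0 \<or> A i j = -1) \<and>
     (\<forall>v::vec. (\<forall>j\<ge>r. v j = 0) \<and> v \<noteq> (\<lambda>_. 0) \<longrightarrow> form r A v v > 0) \<and>
     (\<forall>i<r. \<forall>j<r. (i, j) \<in> {(a, b). a < r \<and> b < r \<and> A a b = -1}\<^sup>*)"

text \<open>Reflection sigma_beta (simply laced: beta coroot = beta).\<close>
definition refl :: "nat \<Rightarrow> (nat \<Rightarrow> nat \<Rightarrow> int) \<Rightarrow> vec \<Rightarrow> weyl" where
  "refl r A \<beta> = (\<lambda>v j. v j - form r A v \<beta> * \<beta> j)"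

definition word_elem :: "nat \<Rightarrow> (nat \<Rightarrow> nat \<Rightarrow> int) \<Rightarrow> nat list \<Rightarrow> weyl" where
  "word_elem r A ws = foldr (\<lambda>i f. refl r A (simple i) \<circ> f) ws id"

definition weyl_group :: "nat \<Rightarrow> (nat \<Rightarrow> nat \<Rightarrow> int) \<Rightarrow> weyl set" where
  "weyl_group r A = {word_elem r A ws | ws. set ws \<subseteq> {..<r}}"

definition wlen :: "nat \<Rightarrow> (nat \<Rightarrow> nat \<Rightarrow> int) \<Rightarrow> weyl \<Rightarrow> nat" where
  "wlen r A w = (LEAST k. \<exists>ws. length ws = k \<and> set ws \<subseteq> {..<r} \<and> word_elem r A ws = w)"

definition roots :: "nat \<Rightarrow> (nat \<Rightarrow> nat \<Rightarrow> int) \<Rightarrow> vec set" where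
  "roots r A = {w (simple i) | w i. w \<in> weyl_group r A \<and> i < r}"

definition pos_roots :: "nat \<Rightarrow> (nat \<Rightarrow> nat \<Rightarrow> int) \<Rightarrow> vec set" where
  "pos_roots r A = {\<beta> \<in> roots r A. \<forall>j. \<beta> j \<ge> 0}"

definition neg_roots :: "nat \<Rightarrow> (nat \<Rightarrow> nat \<Rightarrow> int) \<Rightarrow> vec set" where
  "neg_roots r A = (\<lambda>\<beta>. - \<beta>) ` pos_roots r A"

definition inv_set :: "nat \<Rightarrow> (nat \<Rightarrow> nat \<Rightarrow> int) \<Rightarrow> weyl \<Rightarrow> vec set" where
  "inv_set r A w = pos_roots r A \<inter> w ` neg_roots r A"

text \<open>Chow ring of G/B: elements are coefficient functions c on W w.r.t. the
  basis Z_w (Z_w of codimension l(w), Z_id = 1).  Multiplication by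
  D_i = Z_(sigma_i) is given by the Chevalley formula
  D_i Z_v = sum over beta in Phi+ with l(sigma_beta v) = l(v)+1 of
  (coefficient of alpha_i in beta) Z_(sigma_beta v).\<close>

definition Dmul :: "nat \<Rightarrow> (nat \<Rightarrow> nat \<Rightarrow> int) \<Rightarrow> nat \<Rightarrow> (weyl \<Rightarrow> int) \<Rightarrow> (weyl \<Rightarrow> int)" where
  "Dmul r A i c = (\<lambda>u. if u \<in> weyl_group r A then
      (\<Sum>\<beta> \<in> {\<beta> \<in> pos_roots r A. wlen r A (refl r A \<beta> \<circ> u) + 1 = wlen r A u}.
          \<beta> i * c (refl r A \<beta> \<circ> u))
    else 0)"

definition chow_one :: "weyl \<Rightarrow> int" where
  "chow_one = (\<lambda>u. if u = id then 1 else 0)"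

text \<open>C_(w,n_1..n_r): coefficient of Z_w in D_1^n_1 ... D_r^n_r.\<close>
definition Ccoef :: "nat \<Rightarrow> (nat \<Rightarrow> nat \<Rightarrow> int) \<Rightarrow> weyl \<Rightarrow> (nat \<Rightarrow> nat) \<Rightarrow> int" where
  "Ccoef r A w n = foldr (\<lambda>j c. (Dmul r A j ^^ n j) c) [0..<r] chow_one w"

definition supp :: "vec \<Rightarrow> nat set" where
  "supp v = {j. v j \<noteq> 0}"

definition R_set :: "nat set \<Rightarrow> vec set \<Rightarrow> vec set" where
  "R_set I S = {\<alpha> \<in> S. supp \<alpha> \<inter> I \<noteq> {}}"

definition is_cluster :: "nat \<Rightarrow> (nat \<Rightarrow> nat \<Rightarrow> int) \<Rightarrow> nat set \<Rightarrow> vec set \<Rightarrow> bool" where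
  "is_cluster r A I S \<longleftrightarrow>
     (\<forall>\<alpha>\<in>S. \<forall>j\<in>I. \<alpha> j \<le> 1) \<and>
     (\<forall>\<alpha>\<in>S. \<forall>\<beta>\<in>S. \<alpha> \<noteq> \<beta> \<longrightarrow> form r A \<alpha> \<beta> \<noteq> -1) \<and>
     (\<forall>\<alpha>\<in>S. \<forall>\<beta>\<in>S. form r A \<alpha> \<beta> = 0 \<longrightarrow> supp \<alpha> \<inter> supp \<beta> \<inter> I = {})"

definition A_config :: "nat \<Rightarrow> (nat \<Rightarrow> nat \<Rightarrow> int) \<Rightarrow> vec set \<Rightarrow> (nat \<Rightarrow> nat) \<Rightarrow> bool" where
  "A_config r A S n \<longleftrightarrow> S \<subseteq> pos_roots r A \<and> (\<Sum>j<r. n j) = card S"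

definition supp_tuple :: "nat \<Rightarrow> (nat \<Rightarrow> nat) \<Rightarrow> nat set" where
  "supp_tuple r n = {j. j < r \<and> n j > 0}"

definition excessive :: "nat \<Rightarrow> vec set \<Rightarrow> (nat \<Rightarrow> nat) \<Rightarrow> bool" where
  "excessive r S n \<longleftrightarrow>
     card (R_set (supp_tuple r n) S) = (\<Sum>j<r. n j) \<and>
     (\<forall>J. J \<noteq> {} \<and> J \<subset> supp_tuple r n \<longrightarrow> card (R_set J S) > (\<Sum>j\<in>J. n j))"

definition excessive_cluster :: "nat \<Rightarrow> (nat \<Rightarrow> nat \<Rightarrow> int) \<Rightarrow> vec set \<Rightarrow> (nat \<Rightarrow> nat) \<Rightarrow> bool" where
  "excessive_cluster r A S n \<longleftrightarrow> excessive r S n \<and> is_cluster r A (supp_tuple r n) S"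

inductive exc_clusterizable :: "nat \<Rightarrow> (nat \<Rightarrow> nat \<Rightarrow> int) \<Rightarrow> vec set \<Rightarrow> (nat \<Rightarrow> nat) \<Rightarrow> bool"
  for r A where
  empty: "(\<forall>j<r. n j = 0) \<Longrightarrow> exc_clusterizable r A {} n"
| step: "S \<noteq> {} \<Longrightarrow> I \<noteq> {} \<Longrightarrow> I \<subseteq> supp_tuple r n \<Longrightarrow>
         k = (\<lambda>j. if j \<in> I then n j else 0) \<Longrightarrow>
         card (R_set I S) = (\<Sum>j<r. k j) \<Longrightarrow>
         excessive_cluster r A (R_set I S) k \<Longrightarrow>
         exc_clusterizable r A (S - R_set I S) (\<lambda>j. n j - k j) \<Longrightarrow>
         exc_clusterizable r A S n"

text \<open>Path-originating sequence 0 = beta_0, beta_1, ..., beta_k (as a list of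
  length k+1).\<close>
definition path_originating :: "nat \<Rightarrow> (nat \<Rightarrow> nat \<Rightarrow> int) \<Rightarrow> vec list \<Rightarrow> bool" where
  "path_originating r A bs \<longleftrightarrow>
     bs \<noteq> [] \<and> bs ! 0 = (\<lambda>_. 0) \<and>
     (\<forall>j\<in>{1..<length bs}. bs ! j \<in> pos_roots r A) \<and>
     (\<exists>is. length is + 1 = length bs \<and>
        (\<forall>t<length is. is ! t < r \<and> bs ! (t + 1) = (\<lambda>m. (bs ! t) m + simple (is ! t) m)) \<and>
        (\<forall>t. t + 1 < length is \<longrightarrow> form r A (simple (is ! t)) (simple (is ! (t + 1))) = -1) \<and>
        (\<forall>t t'. t < length is \<and> t' < length is \<and> (t' > t + 1 \<or> t > t' + 1) \<longrightarrow>
            form r A (simple (is ! t)) (simple (is ! t')) = 0))"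

text \<open>sigma_(beta_n) o ... o sigma_(beta_1) for bs = [beta_0, ..., beta_n].\<close>
definition refl_prod :: "nat \<Rightarrow> (nat \<Rightarrow> nat \<Rightarrow> int) \<Rightarrow> vec list \<Rightarrow> weyl" where
  "refl_prod r A bs = fold (\<lambda>\<beta> f. refl r A \<beta> \<circ> f) (tl bs) id"

end

theory Submission
  imports Defs
begin


definition inQ :: "nat \<Rightarrow> vec \<Rightarrow> bool" where
  "inQ r v \<longleftrightarrow> (\<forall>j\<ge>r. v j = 0)"

definition lin :: "weyl \<Rightarrow> bool" where
  "lin f \<longleftrightarrow> (\<forall>u v. f (\<lambda>j. u j + v j) = (\<lambda>j. f u j + f v j)) \<and>
               (\<forall>c u. f (\<lambda>j. c * u j) = (\<lambda>j. c * f u j))"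

lemma lin_add: "lin f \<Longrightarrow> f (\<lambda>j. u j + v j) = (\<lambda>j. f u j + f v j)"
  unfolding lin_def by blast

lemma lin_smul: "lin f \<Longrightarrow> f (\<lambda>j. c * u j) = (\<lambda>j. c * f u j)"
  unfolding lin_def by blast

lemma lin_zero: "lin f \<Longrightarrow> f (\<lambda>_. 0) = (\<lambda>_. 0)"
  using lin_smul[of f 0 "\<lambda>_. 0"] by simp

lemma lin_uminus: "lin f \<Longrightarrow> f (- u) = - f u"
  using lin_smul[of f "-1" u] by (simp add: fun_Compl_def)

lemma lin_diff: "lin f \<Longrightarrow> f (\<lambda>j. u j - v j) = (\<lambda>j. f u j - f v j)"
proof -
  assume l: "lin f"
  have "(\<lambda>j. u j - v j) = (\<lambda>j. u j + (- v) j)" by simp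
  then have "f (\<lambda>j. u j - v j) = (\<lambda>j. f u j + f (- v) j)" using lin_add[OF l] by metis
  then show ?thesis using lin_uminus[OF l, of v] by simp
qed

lemma lin_sum: assumes "lin f" shows "finite F \<Longrightarrow>
   f (\<lambda>k. \<Sum>j\<in>F. c j * v j k) = (\<lambda>k. \<Sum>j\<in>F. c j * f (v j) k)"
proof (induction F rule: finite_induct)
  case empty
  then show ?case using lin_zero[OF assms] by simp
next
  case (insert x F)
  have "f (\<lambda>k. \<Sum>j\<in>insert x F. c j * v j k) = f (\<lambda>k. c x * v x k + (\<Sum>j\<in>F. c j * v j k))"
    using insert by simp
  also have "\<dots> = (\<lambda>k. f (\<lambda>k. c x * v x k) k + f (\<lambda>k. \<Sum>j\<in>F. c j * v j k) k)"
    using lin_add[OF assms] by metis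
  also have "\<dots> = (\<lambda>k. c x * f (v x) k + (\<Sum>j\<in>F. c j * f (v j) k))"
    using insert lin_smul[OF assms] by simp
  finally show ?case using insert by simp
qed

lemma sum_sq_sym:
  fixes m :: nat
  assumes "\<And>j k. j < m \<Longrightarrow> k < m \<Longrightarrow> t j k = t k j"
  shows "(\<Sum>j<m. \<Sum>k<m. t j k) = (\<Sum>j<m. t j j) + 2 * (\<Sum>j<m. \<Sum>k<j. (t j k :: int))"
  using assms
proof (induction m)
  case 0
  then show ?case by simp
next
  case (Suc m)
  have IH: "(\<Sum>j<m. \<Sum>k<m. t j k) = (\<Sum>j<m. t j j) + 2 * (\<Sum>j<m. \<Sum>k<j. t j k)"
    using Suc by simp
  have s: "(\<Sum>j<m. t j m) = (\<Sum>k<m. t m k)"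
    using Suc.prems by (intro sum.cong) auto
  have "(\<Sum>j<Suc m. \<Sum>k<Suc m. t j k) = (\<Sum>j<m. \<Sum>k<m. t j k) + (\<Sum>j<m. t j m) + (\<Sum>k<m. t m k) + t m m"
    by (simp add: sum.distrib)
  then show ?case using IH s by simp
qed

lemma form_sym_gen:
  assumes "\<And>i j. i < r \<Longrightarrow> j < r \<Longrightarrow> A i j = A j i"
  shows "form r A u v = form r A v u"
  unfolding form_def
  apply (subst sum.swap)
  apply (intro sum.cong refl)
  using assms by (simp add: mult.commute mult.left_commute)

locale cart =
  fixes r :: nat and A :: "nat \<Rightarrow> nat \<Rightarrow> int"
  assumes cart: "simply_laced_cartan r A"
begin

abbreviation "B \<equiv> form r A"
abbreviation "sr j \<equiv> refl r A (simple j)"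
abbreviation "W \<equiv> weyl_group r A"
abbreviation "len \<equiv> wlen r A"
abbreviation "pos \<equiv> pos_roots r A"
abbreviation "neg \<equiv> neg_roots r A"
abbreviation "rts \<equiv> roots r A"
abbreviation "N \<equiv> inv_set r A"
abbreviation "wd \<equiv> word_elem r A"
abbreviation "Q \<equiv> inQ r"

lemma A_diag: "i < r \<Longrightarrow> A i i = 2"
  using cart unfolding simply_laced_cartan_def by blast
lemma A_sym: "i < r \<Longrightarrow> j < r \<Longrightarrow> A i j = A j i"
  using cart unfolding simply_laced_cartan_def by blast
lemma A_off: "i < r \<Longrightarrow> j < r \<Longrightarrow> i \<noteq> j \<Longrightarrow> A i j = 0 \<or> A i j = -1"
  using cart unfolding simply_laced_cartan_def by blast
lemma posdef: "Q v \<Longrightarrow> v \<noteq> (\<lambda>_. 0) \<Longrightarrow> B v v > 0"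
  using cart unfolding simply_laced_cartan_def inQ_def by blast

lemma A_le0: "i < r \<Longrightarrow> j < r \<Longrightarrow> i \<noteq> j \<Longrightarrow> A i j \<le> 0"
  using A_off by fastforce

lemma B_sym: "B u v = B v u"
  by (rule form_sym_gen) (simp add: A_sym)

lemma B_add1: "B (\<lambda>j. u j + v j) w = B u w + B v w"
  unfolding form_def by (simp add: algebra_simps sum.distrib)
lemma B_smul1: "B (\<lambda>j. c * u j) w = c * B u w"
  unfolding form_def by (simp add: algebra_simps sum_distrib_left)
lemma B_diff1: "B (\<lambda>j. u j - v j) w = B u w - B v w"
  unfolding form_def by (simp add: algebra_simps sum_subtractf)
lemma B_neg1: "B (- u) w = - B u w"
  unfolding form_def by (simp add: sum_negf)
lemma B_zero1: "B (\<lambda>_. 0) w = 0"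
  unfolding form_def by simp
lemma B_add2: "B w (\<lambda>j. u j + v j) = B w u + B w v"
  using B_add1 B_sym by metis
lemma B_smul2: "B w (\<lambda>j. c * u j) = c * B w u"
  using B_smul1 B_sym by metis
lemma B_diff2: "B w (\<lambda>j. u j - v j) = B w u - B w v"
  using B_diff1 B_sym by metis
lemma B_neg2: "B w (- u) = - B w u"
  using B_neg1 B_sym by metis
lemma B_zero2: "B w (\<lambda>_. 0) = 0"
  using B_zero1 B_sym by metis

lemma sum_simple: "a < r \<Longrightarrow> (\<Sum>j<r. simple a j * X j) = (X a :: int)"
proof -
  assume a: "a < r"
  have "(\<Sum>j<r. simple a j * X j) = (\<Sum>j<r. if j = a then X j else 0)"
    by (rule sum.cong) (auto simp: simple_def)
  also have "\<dots> = X a" using a by (simp add: sum.delta)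
  finally show ?thesis .
qed

lemma sum_simple': "a < r \<Longrightarrow> (\<Sum>j<r. X j * simple a j) = (X a :: int)"
  using sum_simple[of a X] by (simp add: mult.commute)

lemma B_simple1: "a < r \<Longrightarrow> B (simple a) v = (\<Sum>k<r. A a k * v k)"
proof -
  assume a: "a < r"
  have "B (simple a) v = (\<Sum>j<r. simple a j * (\<Sum>k<r. A j k * v k))"
    unfolding form_def by (simp add: sum_distrib_left mult.assoc)
  also have "\<dots> = (\<Sum>k<r. A a k * v k)" using sum_simple[OF a] .
  finally show ?thesis .
qed

lemma B_simple: "a < r \<Longrightarrow> b < r \<Longrightarrow> B (simple a) (simple b) = A a b"
  by (simp add: B_simple1 sum_simple')

lemma B_simple_self: "a < r \<Longrightarrow> B (simple a) (simple a) = 2"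
  using B_simple A_diag by simp

lemma B_even: "even (B v v)"
proof -
  have "B v v = (\<Sum>j<r. v j * A j j * v j) + 2 * (\<Sum>j<r. \<Sum>k<j. v j * A j k * v k)"
    unfolding form_def by (rule sum_sq_sym) (simp add: A_sym mult.commute mult.left_commute)
  moreover have "(\<Sum>j<r. v j * A j j * v j) = (\<Sum>j<r. 2 * (v j * v j))"
    by (intro sum.cong) (auto simp: A_diag)
  ultimately show ?thesis by (simp add: sum_distrib_left[symmetric])
qed

lemma posdef2: "Q v \<Longrightarrow> v \<noteq> (\<lambda>_. 0) \<Longrightarrow> B v v \<ge> 2"
  using posdef[of v] B_even[of v] by (auto elim!: evenE) 

end


definition presB :: "nat \<Rightarrow> (nat \<Rightarrow> nat \<Rightarrow> int) \<Rightarrow> weyl \<Rightarrow> bool" where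
  "presB r A f \<longleftrightarrow> (\<forall>u v. form r A (f u) (f v) = form r A u v)"

context cart begin

lemma refl_apply: "refl r A \<beta> v = (\<lambda>j. v j - B v \<beta> * \<beta> j)"
  by (simp add: refl_def)

lemma refl_lin: "lin (refl r A \<beta>)"
  unfolding lin_def refl_def by (auto simp: B_add1 B_smul1 algebra_simps fun_eq_iff)

lemma refl_pres: "B \<beta> \<beta> = 2 \<Longrightarrow> B (refl r A \<beta> u) (refl r A \<beta> v) = B u v"
proof -
  assume bb: "B \<beta> \<beta> = 2"
  define a where "a = B u \<beta>"
  define b where "b = B v \<beta>"
  have "B (refl r A \<beta> u) (refl r A \<beta> v) = B (\<lambda>j. u j - a * \<beta> j) (\<lambda>j. v j - b * \<beta> j)"
    by (simp add: refl_def a_def b_def)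
  also have "\<dots> = B u (\<lambda>j. v j - b * \<beta> j) - a * B \<beta> (\<lambda>j. v j - b * \<beta> j)"
    by (simp only: B_diff1 B_smul1)
  also have "\<dots> = (B u v - b * B u \<beta>) - a * (B \<beta> v - b * B \<beta> \<beta>)"
    by (simp only: B_diff2 B_smul2)
  also have "\<dots> = B u v" using bb B_sym[of \<beta> v] unfolding a_def b_def by (simp add: algebra_simps)
  finally show ?thesis .
qed

lemma refl_presB: "B \<beta> \<beta> = 2 \<Longrightarrow> presB r A (refl r A \<beta>)"
  unfolding presB_def using refl_pres by blast

lemma refl_invol: "B \<beta> \<beta> = 2 \<Longrightarrow> refl r A \<beta> (refl r A \<beta> v) = v"
proof -
  assume bb: "B \<beta> \<beta> = 2"
  have "B (\<lambda>j. v j - B v \<beta> * \<beta> j) \<beta> = - B v \<beta>"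
    by (simp only: B_diff1 B_smul1) (simp add: bb)
  then show ?thesis by (simp add: refl_def)
qed

lemma refl_invol': "B \<beta> \<beta> = 2 \<Longrightarrow> refl r A \<beta> \<circ> refl r A \<beta> = id"
  using refl_invol by (simp add: fun_eq_iff)

lemma refl_Q: "Q \<beta> \<Longrightarrow> Q v \<Longrightarrow> Q (refl r A \<beta> v)"
  unfolding refl_def inQ_def by simp

lemma refl_uminus: "refl r A (- \<beta>) = refl r A \<beta>"
  unfolding refl_def by (simp add: fun_eq_iff B_neg2)

lemma refl_self: "B \<beta> \<beta> = 2 \<Longrightarrow> refl r A \<beta> \<beta> = - \<beta>"
  unfolding refl_def by (simp add: fun_eq_iff)

lemma conj_gen: "lin f \<Longrightarrow> presB r A f \<Longrightarrow> refl r A (f \<beta>) (f v) = f (refl r A \<beta> v)"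
proof -
  assume l: "lin f" and p: "presB r A f"
  have "f (refl r A \<beta> v) = f (\<lambda>j. v j - B v \<beta> * \<beta> j)" by (simp add: refl_def)
  also have "\<dots> = (\<lambda>j. f v j - f (\<lambda>j. B v \<beta> * \<beta> j) j)" using lin_diff[OF l] by metis
  also have "\<dots> = (\<lambda>j. f v j - B v \<beta> * f \<beta> j)" using lin_smul[OF l] by metis
  finally show ?thesis using p unfolding presB_def refl_def by simp
qed

lemma sr_simple: "j < r \<Longrightarrow> sr j (simple j) = - simple j"
  using refl_self B_simple_self by blast

lemma simple_Q: "j < r \<Longrightarrow> Q (simple j)"
  unfolding inQ_def simple_def by simp

lemma wd_Nil: "wd [] = id" by (simp add: word_elem_def)
lemma wd_Cons: "wd (j # ws) = sr j \<circ> wd ws" by (simp add: word_elem_def)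
lemma wd_append: "wd (xs @ ys) = wd xs \<circ> wd ys"
  by (induction xs) (auto simp: wd_Nil wd_Cons)
lemma wd_single: "wd [j] = sr j" by (simp add: wd_Cons wd_Nil)

lemma W_iff: "u \<in> W \<longleftrightarrow> (\<exists>ws. set ws \<subseteq> {..<r} \<and> wd ws = u)"
  unfolding weyl_group_def by blast

lemma wd_W: "set ws \<subseteq> {..<r} \<Longrightarrow> wd ws \<in> W"
  using W_iff by blast

lemma wd_props: "set ws \<subseteq> {..<r} \<Longrightarrow> lin (wd ws) \<and> presB r A (wd ws) \<and> (\<forall>x. Q x \<longrightarrow> Q (wd ws x))"
proof (induction ws)
  case Nil
  then show ?case by (simp add: wd_Nil lin_def presB_def)
next
  case (Cons j ws)
  then have j: "j < r" and IH: "lin (wd ws) \<and> presB r A (wd ws) \<and> (\<forall>x. Q x \<longrightarrow> Q (wd ws x))" by auto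
  have l: "lin (sr j)" by (rule refl_lin)
  have p: "presB r A (sr j)" using refl_presB B_simple_self j by blast
  have "lin (sr j \<circ> wd ws)" using l IH unfolding lin_def by simp
  moreover have "presB r A (sr j \<circ> wd ws)" using p IH unfolding presB_def by simp
  moreover have "\<forall>x. Q x \<longrightarrow> Q ((sr j \<circ> wd ws) x)" using IH refl_Q simple_Q j by simp
  ultimately show ?case unfolding wd_Cons by blast
qed

lemma W_props: "u \<in> W \<Longrightarrow> lin u \<and> presB r A u \<and> (\<forall>x. Q x \<longrightarrow> Q (u x))"
proof -
  assume "u \<in> W"
  then obtain ws where "set ws \<subseteq> {..<r}" "wd ws = u" unfolding W_iff by blast
  then show ?thesis using wd_props by blast
qed
lemma W_lin: "u \<in> W \<Longrightarrow> lin u" using W_props by blast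
lemma W_presB: "u \<in> W \<Longrightarrow> presB r A u" using W_props by blast
lemma W_pres: "u \<in> W \<Longrightarrow> B (u x) (u y) = B x y" using W_presB presB_def by blast
lemma W_Q: "u \<in> W \<Longrightarrow> Q x \<Longrightarrow> Q (u x)" using W_props by blast

lemma W_id: "id \<in> W" using wd_W[of "[]"] wd_Nil by simp
lemma W_sr: "j < r \<Longrightarrow> sr j \<in> W" using wd_W[of "[j]"] wd_single by simp
lemma W_comp: "u \<in> W \<Longrightarrow> v \<in> W \<Longrightarrow> u \<circ> v \<in> W"
proof -
  assume "u \<in> W" "v \<in> W"
  then obtain xs ys where "set xs \<subseteq> {..<r}" "wd xs = u" "set ys \<subseteq> {..<r}" "wd ys = v"
    unfolding W_iff by blast
  then show ?thesis using wd_W[of "xs @ ys"] wd_append by auto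
qed

lemma sr_invol: "j < r \<Longrightarrow> sr j \<circ> sr j = id"
  using refl_invol' B_simple_self by blast

lemma sr_invol1: "j < r \<Longrightarrow> sr j (sr j v) = v"
  using refl_invol B_simple_self by blast

lemma wd_rev_inv: "set ws \<subseteq> {..<r} \<Longrightarrow> wd (rev ws) \<circ> wd ws = id"
proof (induction ws)
  case Nil
  then show ?case by (simp add: wd_Nil)
next
  case (Cons j ws)
  then have "wd (rev (j # ws)) \<circ> wd (j # ws) = wd (rev ws) \<circ> (sr j \<circ> sr j) \<circ> wd ws"
    by (simp add: wd_append wd_Cons wd_Nil comp_assoc)
  then show ?case using Cons sr_invol by simp
qed

lemma W_inv: "u \<in> W \<Longrightarrow> \<exists>v\<in>W. u \<circ> v = id \<and> v \<circ> u = id"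
proof -
  assume "u \<in> W"
  then obtain ws where ws: "set ws \<subseteq> {..<r}" "wd ws = u" using W_iff by metis
  have "wd (rev ws) \<circ> wd ws = id" using wd_rev_inv ws by blast
  moreover have "wd ws \<circ> wd (rev ws) = id" using wd_rev_inv[of "rev ws"] ws by simp
  moreover have "wd (rev ws) \<in> W" using wd_W ws by simp
  ultimately show ?thesis using ws by blast
qed

lemma W_inj: "u \<in> W \<Longrightarrow> inj u"
  using W_inv by (metis inj_on_id inj_on_imageI2)

lemma W_inj': "u \<in> W \<Longrightarrow> u x = u y \<Longrightarrow> x = y"
  using W_inj by (meson injD)

lemma W_conj: "u \<in> W \<Longrightarrow> refl r A (u \<beta>) (u v) = u (refl r A \<beta> v)"
  using conj_gen W_lin W_presB by blast

lemma W_conj': "u \<in> W \<Longrightarrow> refl r A (u \<beta>) \<circ> u = u \<circ> refl r A \<beta>"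
  using W_conj by (simp add: fun_eq_iff)

lemma root_iff: "\<beta> \<in> rts \<longleftrightarrow> (\<exists>u\<in>W. \<exists>i<r. \<beta> = u (simple i))"
  unfolding roots_def by blast

lemma simple_root: "i < r \<Longrightarrow> simple i \<in> rts"
  using root_iff W_id by (metis id_apply)

lemma root_B: "\<beta> \<in> rts \<Longrightarrow> B \<beta> \<beta> = 2"
  using root_iff W_pres B_simple_self by metis

lemma root_Q: "\<beta> \<in> rts \<Longrightarrow> Q \<beta>"
  using root_iff W_Q simple_Q by metis

lemma root_nz: "\<beta> \<in> rts \<Longrightarrow> \<beta> \<noteq> (\<lambda>_. 0)"
  using root_B B_zero1 by force

lemma W_root: "u \<in> W \<Longrightarrow> \<beta> \<in> rts \<Longrightarrow> u \<beta> \<in> rts"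
  unfolding root_iff using W_comp by (metis comp_apply)

lemma root_uminus: "\<beta> \<in> rts \<Longrightarrow> - \<beta> \<in> rts"
proof -
  assume "\<beta> \<in> rts"
  then obtain u i where u: "u \<in> W" "i < r" "\<beta> = u (simple i)" using root_iff by blast
  have "(u \<circ> sr i) (simple i) = - \<beta>" using u sr_simple lin_uminus W_lin by (simp add: fun_Compl_def)
  then show ?thesis using root_iff u W_comp W_sr by metis
qed

lemma refl_W: "\<beta> \<in> rts \<Longrightarrow> refl r A \<beta> \<in> W"
proof -
  assume "\<beta> \<in> rts"
  then obtain u i where u: "u \<in> W" "i < r" "\<beta> = u (simple i)" using root_iff by blast
  obtain v where v: "v \<in> W" "u \<circ> v = id" "v \<circ> u = id" using W_inv u by blast
  have "refl r A \<beta> \<circ> u = u \<circ> sr i" using W_conj' u by blast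
  then have "refl r A \<beta> \<circ> u \<circ> v = u \<circ> sr i \<circ> v" by simp
  then have "refl r A \<beta> = u \<circ> sr i \<circ> v" using v by (simp add: comp_assoc)
  then show ?thesis using W_comp W_sr u v by simp
qed

lemma dichot:
  assumes Qv: "Q v" and Bv: "B v v = 2"
  shows "(\<forall>j. v j \<ge> 0) \<or> (\<forall>j. v j \<le> 0)"
proof (rule ccontr)
  assume c: "\<not> ?thesis"
  define p where "p = (\<lambda>j. max (v j) 0)"
  define q where "q = (\<lambda>j. max (- v j) 0)"
  have vpq: "v = (\<lambda>j. p j - q j)" unfolding p_def q_def by (auto simp: fun_eq_iff)
  have Bpq: "B p q \<le> 0"
    unfolding form_def
  proof (intro sum_nonpos)
    fix j k assume j: "j \<in> {..<r}" and k: "k \<in> {..<r}"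
    show "p j * A j k * q k \<le> 0"
    proof (cases "j = k")
      case True
      then have "p j * q k = 0" unfolding p_def q_def by auto
      moreover have "p j * A j k * q k = (p j * q k) * A j k" by (simp add: algebra_simps)
      ultimately show ?thesis by (metis mult_zero_left order_refl)
    next
      case False
      then have "A j k \<le> 0" using A_le0 j k by auto
      moreover have "p j \<ge> 0" "q k \<ge> 0" unfolding p_def q_def by auto
      ultimately show ?thesis by (simp add: mult_nonneg_nonpos mult_nonpos_nonneg mult.commute mult.left_commute)
    qed
  qed
  have pnz: "p \<noteq> (\<lambda>_. 0)" using c unfolding p_def by (auto simp: fun_eq_iff max_def split: if_splits)
  have qnz: "q \<noteq> (\<lambda>_. 0)" using c unfolding q_def by (auto simp: fun_eq_iff max_def split: if_splits)
  have Qp: "Q p" "Q q" using Qv unfolding p_def q_def inQ_def by auto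
  have "B p p \<ge> 2" "B q q \<ge> 2" using posdef2 Qp pnz qnz by auto
  moreover have "B v v = B p p - 2 * B p q + B q q"
    unfolding vpq by (simp add: B_diff1 B_diff2 B_sym[of q p])
  ultimately show False using Bpq Bv by linarith
qed

lemma vneg_neg[simp]: "- (- (v::vec)) = v"
  by (simp add: fun_Compl_def)

lemma vneg_apply[simp]: "(- (v::vec)) j = - v j"
  by (simp add: fun_Compl_def)

lemma neg_iff: "\<beta> \<in> neg \<longleftrightarrow> - \<beta> \<in> pos"
proof
  assume "\<beta> \<in> neg"
  then obtain \<gamma> where "\<gamma> \<in> pos" "\<beta> = - \<gamma>" unfolding neg_roots_def by blast
  then show "- \<beta> \<in> pos" by simp
next
  assume "- \<beta> \<in> pos"
  then have "- (- \<beta>) \<in> neg" unfolding neg_roots_def by blast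
  then show "\<beta> \<in> neg" by simp
qed

lemma root_uminus_iff: "- \<beta> \<in> rts \<longleftrightarrow> \<beta> \<in> rts"
  using root_uminus[of \<beta>] root_uminus[of "- \<beta>"] by auto

lemma pos_iff: "\<beta> \<in> pos \<longleftrightarrow> \<beta> \<in> rts \<and> (\<forall>j. \<beta> j \<ge> 0)"
  unfolding pos_roots_def by blast

lemma neg_iff': "\<beta> \<in> neg \<longleftrightarrow> \<beta> \<in> rts \<and> (\<forall>j. \<beta> j \<le> 0)"
  unfolding neg_iff pos_iff root_uminus_iff by auto

lemma root_cases: "\<beta> \<in> rts \<Longrightarrow> \<beta> \<in> pos \<or> \<beta> \<in> neg"
  using dichot root_Q root_B pos_iff neg_iff' by blast

lemma pos_not_neg: "\<beta> \<in> pos \<Longrightarrow> \<beta> \<notin> neg"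
proof
  assume "\<beta> \<in> pos" "\<beta> \<in> neg"
  then have "\<beta> = (\<lambda>_. 0)" "\<beta> \<in> rts" using pos_iff neg_iff' by (auto simp: fun_eq_iff intro: antisym)
  then show False using root_nz by blast
qed

lemma pos_root: "\<beta> \<in> pos \<Longrightarrow> \<beta> \<in> rts" using pos_iff by blast
lemma neg_root: "\<beta> \<in> neg \<Longrightarrow> \<beta> \<in> rts" using neg_iff' by blast

lemma simple_pos: "i < r \<Longrightarrow> simple i \<in> pos"
  using pos_iff simple_root by (simp add: simple_def)

lemma simple_neg: "i < r \<Longrightarrow> - simple i \<in> neg"
  using neg_iff simple_pos by simp

lemma sr_pos:
  assumes j: "j < r" and b: "\<beta> \<in> pos" and ne: "\<beta> \<noteq> simple j"
  shows "sr j \<beta> \<in> pos"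
proof -
  have br: "\<beta> \<in> rts" using b pos_iff by blast
  have "\<exists>k. k \<noteq> j \<and> \<beta> k > 0"
  proof (rule ccontr)
    assume nex: "\<not> (\<exists>k. k \<noteq> j \<and> \<beta> k > 0)"
    have z: "\<forall>k. k \<noteq> j \<longrightarrow> \<beta> k = 0"
    proof (intro allI impI)
      fix k assume "k \<noteq> j"
      then have "\<not> \<beta> k > 0" using nex by blast
      moreover have "\<beta> k \<ge> 0" using b pos_iff by blast
      ultimately show "\<beta> k = 0" by simp
    qed
    define c where "c = \<beta> j"
    have e: "\<beta> = (\<lambda>k. c * simple j k)" using z unfolding c_def by (auto simp: fun_eq_iff simple_def)
    have "B (\<lambda>k. c * simple j k) (\<lambda>k. c * simple j k) = c * (c * 2)"
      by (simp only: B_smul1 B_smul2 B_simple_self[OF j])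
    then have "B \<beta> \<beta> = c * (c * 2)" using e by simp
    then have "c * c = 1" using root_B br by simp
    moreover have "c \<ge> 0" using b pos_iff unfolding c_def by blast
    ultimately have "c = 1" unfolding zmult_eq_1_iff by auto
    then have "\<beta> j = 1" unfolding c_def .
    then have "\<beta> = simple j" using z by (auto simp: fun_eq_iff simple_def)
    then show False using ne by blast
  qed
  then obtain k where k: "k \<noteq> j" "\<beta> k > 0" by blast
  have "sr j \<beta> k = \<beta> k" using k by (simp add: refl_def simple_def)
  then have "\<not> (sr j \<beta> k \<le> 0)" using k by simp
  then have "sr j \<beta> \<notin> neg" using neg_iff' by blast
  moreover have "sr j \<beta> \<in> rts" using W_root W_sr j br by blast
  ultimately show ?thesis using root_cases by blast
qed

end


context cart begin

lemma len_le: "set ws \<subseteq> {..<r} \<Longrightarrow> len (wd ws) \<le> length ws"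
  unfolding wlen_def by (rule Least_le) blast

lemma len_ex: "u \<in> W \<Longrightarrow> \<exists>ws. length ws = len u \<and> set ws \<subseteq> {..<r} \<and> wd ws = u"
proof -
  assume "u \<in> W"
  then obtain ws where "set ws \<subseteq> {..<r}" "wd ws = u" unfolding W_iff by blast
  then have "\<exists>k ws. length ws = k \<and> set ws \<subseteq> {..<r} \<and> wd ws = u" by blast
  then show ?thesis unfolding wlen_def by (rule LeastI_ex)
qed

lemma len_id: "len id = 0"
  using len_le[of "[]"] wd_Nil by simp

lemma len0: "u \<in> W \<Longrightarrow> len u = 0 \<Longrightarrow> u = id"
  using len_ex wd_Nil by fastforce

lemma pos_neg_disj: "pos \<inter> neg = {}"
  using pos_not_neg by blast

lemma N_id: "N id = {}"
  unfolding inv_set_def using pos_neg_disj by simp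

lemma N_id': "N (\<lambda>a. a) = {}"
  using N_id by (simp add: id_def)

lemma N_sub: "N u \<subseteq> pos" unfolding inv_set_def by blast

lemma sr_uminus: "j < r \<Longrightarrow> sr j (- v) = - sr j v"
  using lin_uminus refl_lin by blast

lemma sr_neg:
  assumes j: "j < r" and g: "\<gamma> \<in> neg" and ne: "\<gamma> \<noteq> - simple j"
  shows "sr j \<gamma> \<in> neg \<and> sr j \<gamma> \<noteq> - simple j"
proof
  have "- \<gamma> \<in> pos" using g neg_iff by blast
  moreover have "- \<gamma> \<noteq> simple j" using ne by (metis vneg_neg)
  ultimately have "sr j (- \<gamma>) \<in> pos" using sr_pos j by blast
  then show sn: "sr j \<gamma> \<in> neg" using sr_uminus[OF j] neg_iff by simp
  show "sr j \<gamma> \<noteq> - simple j"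
  proof
    assume "sr j \<gamma> = - simple j"
    then have "sr j (sr j \<gamma>) = simple j" using sr_uminus[OF j] sr_simple[OF j] by simp
    then have "\<gamma> = simple j" using sr_invol1[OF j] by simp
    then show False using g simple_pos[OF j] pos_not_neg by blast
  qed
qed

lemma sr_neg_image: "j < r \<Longrightarrow> sr j ` neg = (neg - {- simple j}) \<union> {simple j}"
proof (intro equalityI subsetI)
  fix x assume j: "j < r" and "x \<in> sr j ` neg"
  then obtain \<gamma> where g: "\<gamma> \<in> neg" "x = sr j \<gamma>" by blast
  show "x \<in> (neg - {- simple j}) \<union> {simple j}"
  proof (cases "\<gamma> = - simple j")
    case True
    then have "x = simple j" using g sr_uminus[OF j] sr_simple[OF j] by simp
    then show ?thesis by blast
  next
    case False
    have "sr j \<gamma> \<in> neg \<and> sr j \<gamma> \<noteq> - simple j" using sr_neg[OF j g(1) False] .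
    then show ?thesis using g(2) by auto
  qed
next
  fix x assume j: "j < r" and x: "x \<in> (neg - {- simple j}) \<union> {simple j}"
  show "x \<in> sr j ` neg"
  proof (cases "x = simple j")
    case True
    have "sr j (- simple j) = simple j" using sr_uminus[OF j] sr_simple[OF j] by simp
    then show ?thesis using True simple_neg[OF j] by (metis image_eqI)
  next
    case False
    then have "x \<in> neg" "x \<noteq> - simple j" using x by auto
    then have "sr j x \<in> neg" using sr_neg[OF j] by blast
    moreover have "x = sr j (sr j x)" using sr_invol1[OF j] by simp
    ultimately show ?thesis by blast
  qed
qed

lemma N_right:
  assumes u: "u \<in> W" and j: "j < r"
  shows "N (u \<circ> sr j) = (N u - {u (- simple j)}) \<union> ({u (simple j)} \<inter> pos)"
proof -
  have "(u \<circ> sr j) ` neg = u ` (sr j ` neg)" by (rule image_comp[symmetric])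
  also have "\<dots> = u ` ((neg - {- simple j}) \<union> {simple j})"
    using sr_neg_image[OF j] by simp
  also have "\<dots> = (u ` neg - {u (- simple j)}) \<union> {u (simple j)}"
    using W_inj[OF u] by (simp add: image_set_diff)
  finally show ?thesis unfolding inv_set_def by blast
qed

lemma W_uminus: "u \<in> W \<Longrightarrow> u (- v) = - u v"
  using W_lin lin_uminus by blast

lemma N_right_up:
  assumes u: "u \<in> W" and j: "j < r" and p: "u (simple j) \<in> pos"
  shows "N (u \<circ> sr j) = insert (u (simple j)) (N u)" "u (simple j) \<notin> N u"
proof -
  have "u (- simple j) \<in> neg" using W_uminus[OF u] p neg_iff by simp
  then have "u (- simple j) \<notin> pos" using pos_not_neg by blast
  then have "u (- simple j) \<notin> N u" unfolding inv_set_def by blast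
  then show "N (u \<circ> sr j) = insert (u (simple j)) (N u)" using N_right[OF u j] p by blast
  show "u (simple j) \<notin> N u"
  proof
    assume "u (simple j) \<in> N u"
    then obtain \<delta> where "\<delta> \<in> neg" "u (simple j) = u \<delta>" unfolding inv_set_def by blast
    then have "simple j \<in> neg" using W_inj'[OF u] by metis
    then show False using simple_pos[OF j] pos_not_neg by blast
  qed
qed

lemma N_right_down:
  assumes u: "u \<in> W" and j: "j < r" and n: "u (simple j) \<in> neg"
  shows "N (u \<circ> sr j) = N u - {- u (simple j)}" "- u (simple j) \<in> N u"
proof -
  have "u (simple j) \<notin> pos" using n pos_not_neg by blast
  then show "N (u \<circ> sr j) = N u - {- u (simple j)}" using N_right[OF u j] W_uminus[OF u] by simp
  show "- u (simple j) \<in> N u"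
    unfolding inv_set_def using n neg_iff W_uminus[OF u] simple_neg[OF j] by (metis IntI image_eqI)
qed

lemma W_simple_root: "u \<in> W \<Longrightarrow> j < r \<Longrightarrow> u (simple j) \<in> pos \<or> u (simple j) \<in> neg"
  using root_cases W_root simple_root by blast

lemma wd_snoc: "wd (ws @ [j]) = wd ws \<circ> sr j"
  using wd_append wd_single by simp

lemma N_fin_card: "set ws \<subseteq> {..<r} \<Longrightarrow> finite (N (wd ws)) \<and> card (N (wd ws)) \<le> length ws"
proof (induction ws rule: rev_induct)
  case Nil
  then show ?case using N_id' N_id wd_Nil by simp
next
  case (snoc j ws)
  then have ws: "set ws \<subseteq> {..<r}" and j: "j < r" by auto
  have u: "wd ws \<in> W" using wd_W ws by blast
  from snoc.IH ws have IH: "finite (N (wd ws))" "card (N (wd ws)) \<le> length ws" by auto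
  show ?case
  proof (cases "wd ws (simple j) \<in> pos")
    case True
    then show ?thesis unfolding wd_snoc N_right_up(1)[OF u j True] using IH N_right_up(2)[OF u j True]
      by (simp add: card_insert_if)
  next
    case False
    then have "wd ws (simple j) \<in> neg" using W_simple_root u j by blast
    then show ?thesis unfolding wd_snoc N_right_down(1)[OF u j \<open>wd ws (simple j) \<in> neg\<close>] using IH
    proof -
      have "card (N (wd ws) - {- wd ws (simple j)}) \<le> card (N (wd ws))" by (rule card_Diff1_le)
      then show "finite (N (wd ws) - {- wd ws (simple j)}) \<and> card (N (wd ws) - {- wd ws (simple j)}) \<le> length (ws @ [j])"
        using IH by simp
    qed
  qed
qed

lemma DEL:
  assumes "set ws \<subseteq> {..<r}" "\<beta> \<in> pos" "\<beta> \<in> wd ws ` neg"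
  shows "\<exists>ws'. set ws' \<subseteq> set ws \<and> length ws' + 1 = length ws \<and> refl r A \<beta> \<circ> wd ws = wd ws'"
  using assms
proof (induction ws arbitrary: \<beta>)
  case Nil
  then show ?case using wd_Nil pos_not_neg by auto
next
  case (Cons j ws)
  then have ws: "set ws \<subseteq> {..<r}" and j: "j < r" by auto
  obtain \<delta> where d: "\<delta> \<in> neg" "\<beta> = sr j (wd ws \<delta>)" using Cons.prems wd_Cons by auto
  define \<beta>' where "\<beta>' = sr j \<beta>"
  have b': "\<beta>' = wd ws \<delta>" using d sr_invol1[OF j] \<beta>'_def by simp
  show ?case
  proof (cases "\<beta> = simple j")
    case True
    have "refl r A \<beta> \<circ> wd (j # ws) = (sr j \<circ> sr j) \<circ> wd ws" using True wd_Cons by (simp add: comp_assoc)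
    then have "refl r A \<beta> \<circ> wd (j # ws) = wd ws" using sr_invol[OF j] by simp
    then show ?thesis by (intro exI[of _ ws]) auto
  next
    case False
    then have "\<beta>' \<in> pos" using sr_pos[OF j Cons.prems(2)] \<beta>'_def by blast
    moreover have "\<beta>' \<in> wd ws ` neg" using b' d by blast
    ultimately obtain ws' where ws': "set ws' \<subseteq> set ws" "length ws' + 1 = length ws"
        "refl r A \<beta>' \<circ> wd ws = wd ws'" using Cons.IH ws by blast
    have "\<beta> = sr j \<beta>'" using \<beta>'_def sr_invol1[OF j] by simp
    then have "refl r A \<beta> \<circ> sr j = sr j \<circ> refl r A \<beta>'" using W_conj'[OF W_sr[OF j]] by simp
    then have "refl r A \<beta> \<circ> wd (j # ws) = sr j \<circ> refl r A \<beta>' \<circ> wd ws"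
      using wd_Cons by (metis comp_assoc)
    also have "\<dots> = wd (j # ws')" using ws' wd_Cons by (simp add: comp_assoc)
    finally show ?thesis using ws' by (intro exI[of _ "j # ws'"]) auto
  qed
qed

lemma len_card_aux: "\<forall>u. u \<in> W \<and> len u = m \<longrightarrow> finite (N u) \<and> card (N u) = m"
proof (induction m)
  case 0
  then show ?case using len0 N_id by (metis card.empty finite.emptyI)
next
  case (Suc m)
  show ?case
  proof (intro allI impI)
    fix u assume u: "u \<in> W \<and> len u = Suc m"
    obtain ws where ws: "length ws = Suc m" "set ws \<subseteq> {..<r}" "wd ws = u" using len_ex u by metis
    have fc: "finite (N u)" "card (N u) \<le> Suc m" using N_fin_card[OF ws(2)] ws(1,3) by auto
    obtain ws' j where wsj: "ws = ws' @ [j]" using ws(1) by (metis length_0_conv nat.distinct(1) rev_exhaust)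
    have j: "j < r" and ws'r: "set ws' \<subseteq> {..<r}" using ws wsj by auto
    define u' where "u' = wd ws'"
    have u'W: "u' \<in> W" using wd_W ws'r u'_def by blast
    have uu: "u = u' \<circ> sr j" using ws wsj wd_snoc u'_def by simp
    have l1: "len u' \<le> m" using len_le[OF ws'r] ws wsj u'_def by simp
    have l2: "len u' \<ge> m"
    proof (rule ccontr)
      assume "\<not> len u' \<ge> m"
      obtain vs where vs: "length vs = len u'" "set vs \<subseteq> {..<r}" "wd vs = u'" using len_ex u'W by metis
      have "len u \<le> length (vs @ [j])" using len_le[of "vs @ [j]"] vs j uu wd_snoc by simp
      then show False using vs u \<open>\<not> len u' \<ge> m\<close> by simp
    qed
    have IH: "card (N u') = m" using Suc.IH u'W l1 l2 by auto
    show "finite (N u) \<and> card (N u) = Suc m"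
    proof (cases "u' (simple j) \<in> pos")
      case True
      then show ?thesis using N_right_up[OF u'W j True] IH uu fc by (simp add: card_insert_if)
    next
      case False
      then have n: "u' (simple j) \<in> neg" using W_simple_root u'W j by blast
      have b: "- u' (simple j) \<in> N u'" using N_right_down[OF u'W j n] by blast
      then have bp: "- u' (simple j) \<in> pos" "- u' (simple j) \<in> wd ws' ` neg"
        unfolding inv_set_def u'_def by auto
      obtain vs where vs: "set vs \<subseteq> set ws'" "length vs + 1 = length ws'"
         "refl r A (- u' (simple j)) \<circ> wd ws' = wd vs" using DEL[OF ws'r bp] by blast
      have "refl r A (- u' (simple j)) \<circ> u' = u' \<circ> sr j"
        using refl_uminus W_conj'[OF u'W] by simp
      then have "u = wd vs" using vs uu u'_def by simp
      then have "len u \<le> length vs" using len_le vs ws'r by (metis order_trans)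
      then show ?thesis using vs ws wsj u by simp
    qed
  qed
qed

lemma len_card: "u \<in> W \<Longrightarrow> len u = card (N u)"
  using len_card_aux by auto

lemma N_finite: "u \<in> W \<Longrightarrow> finite (N u)"
  using len_card_aux by auto

lemma len_right_up: "u \<in> W \<Longrightarrow> j < r \<Longrightarrow> u (simple j) \<in> pos \<Longrightarrow> len (u \<circ> sr j) = len u + 1"
  using len_card N_right_up N_finite W_comp W_sr by simp

lemma len_right_down: "u \<in> W \<Longrightarrow> j < r \<Longrightarrow> u (simple j) \<in> neg \<Longrightarrow> len (u \<circ> sr j) + 1 = len u"
proof -
  assume u: "u \<in> W" and j: "j < r" and n: "u (simple j) \<in> neg"
  have "card (N u - {- u (simple j)}) + 1 = card (N u)"
    using N_right_down(2)[OF u j n] N_finite[OF u]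
    by (metis Suc_eq_plus1 card_Suc_Diff1)
  then show ?thesis using len_card N_right_down(1)[OF u j n] u W_comp W_sr j by metis
qed

lemma descent_right: "u \<in> W \<Longrightarrow> j < r \<Longrightarrow> len (u \<circ> sr j) < len u \<longleftrightarrow> u (simple j) \<in> neg"
  using len_right_up len_right_down W_simple_root pos_not_neg
  by (metis add_lessD1 less_add_one less_not_refl3 not_less_iff_gr_or_eq)

lemma exists_descent: "u \<in> W \<Longrightarrow> len u > 0 \<Longrightarrow> \<exists>j<r. u (simple j) \<in> neg"
proof -
  assume u: "u \<in> W" and l: "len u > 0"
  obtain ws where ws: "length ws = len u" "set ws \<subseteq> {..<r}" "wd ws = u" using len_ex u by metis
  obtain ws' j where wsj: "ws = ws' @ [j]" using ws(1) l by (metis length_greater_0_conv rev_exhaust)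
  have j: "j < r" and ws'r: "set ws' \<subseteq> {..<r}" using ws wsj by auto
  have "u = wd ws' \<circ> sr j" using ws wsj wd_snoc by simp
  then have "u \<circ> sr j = wd ws' \<circ> (sr j \<circ> sr j)" by (simp add: comp_assoc)
  then have "u \<circ> sr j = wd ws'" using sr_invol[OF j] by simp
  then have "len (u \<circ> sr j) < len u" using len_le[OF ws'r] ws wsj by simp
  then show ?thesis using descent_right u j by blast
qed

lemma len_pos_ex: "u \<in> W \<Longrightarrow> len u > 0 \<Longrightarrow> \<exists>ws j. set ws \<subseteq> {..<r} \<and> j < r \<and> u = wd ws \<circ> sr j \<and> length ws + 1 = len u"
proof -
  assume u: "u \<in> W" and l: "len u > 0"
  obtain ws where ws: "length ws = len u" "set ws \<subseteq> {..<r}" "wd ws = u" using len_ex u by metis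
  obtain ws' j where wsj: "ws = ws' @ [j]" using ws(1) l by (metis length_greater_0_conv rev_exhaust)
  then show ?thesis using ws wd_snoc by auto
qed

lemma SE_down:
  assumes u: "u \<in> W" and b: "\<beta> \<in> N u"
  shows "len (refl r A \<beta> \<circ> u) < len u"
proof -
  obtain ws where ws: "length ws = len u" "set ws \<subseteq> {..<r}" "wd ws = u" using len_ex u by metis
  have "\<beta> \<in> pos" "\<beta> \<in> wd ws ` neg" using b ws unfolding inv_set_def by auto
  then obtain ws' where ws': "set ws' \<subseteq> set ws" "length ws' + 1 = length ws" "refl r A \<beta> \<circ> wd ws = wd ws'"
    using DEL ws by blast
  then have "len (refl r A \<beta> \<circ> u) \<le> length ws'" using len_le ws by (metis order_trans)
  then show ?thesis using ws ws' by simp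
qed

lemma refl_invol_pos: "\<beta> \<in> pos \<Longrightarrow> refl r A \<beta> \<circ> (refl r A \<beta> \<circ> u) = u"
  using refl_invol' root_B pos_root by (metis comp_assoc id_comp)

lemma N_refl_in:
  assumes u: "u \<in> W" and b: "\<beta> \<in> pos" and nb: "\<beta> \<notin> N u"
  shows "\<beta> \<in> N (refl r A \<beta> \<circ> u)"
proof -
  obtain v where v: "v \<in> W" "u \<circ> v = id" "v \<circ> u = id" using W_inv u by blast
  define \<gamma> where "\<gamma> = v (- \<beta>)"
  have g: "\<gamma> \<in> rts" using \<gamma>_def W_root v root_uminus pos_root b by blast
  have ug: "u \<gamma> = - \<beta>" using v \<gamma>_def by (metis comp_apply id_apply)
  have "\<gamma> \<in> neg"
  proof (rule ccontr)
    assume "\<gamma> \<notin> neg"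
    then have "\<gamma> \<in> pos" using root_cases g by blast
    then have "- \<gamma> \<in> neg" using neg_iff by simp
    moreover have "u (- \<gamma>) = \<beta>" using W_uminus[OF u] ug by simp
    ultimately show False using nb b unfolding inv_set_def by blast
  qed
  moreover have "refl r A \<beta> (u \<gamma>) = \<beta>"
    using ug refl_self[OF root_B[OF pos_root[OF b]]] lin_uminus[OF refl_lin] by simp
  ultimately show ?thesis using b unfolding inv_set_def by force
qed

lemma SE_iff:
  assumes u: "u \<in> W" and b: "\<beta> \<in> pos"
  shows "len (refl r A \<beta> \<circ> u) < len u \<longleftrightarrow> \<beta> \<in> N u"
    and "len (refl r A \<beta> \<circ> u) \<noteq> len u"
proof -
  have rW: "refl r A \<beta> \<circ> u \<in> W" using W_comp refl_W pos_root b u by blast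
  have "\<beta> \<notin> N u \<Longrightarrow> len u < len (refl r A \<beta> \<circ> u)"
    using SE_down[OF rW N_refl_in[OF u b]] refl_invol_pos[OF b] by metis
  then show "len (refl r A \<beta> \<circ> u) < len u \<longleftrightarrow> \<beta> \<in> N u"
    using SE_down[OF u] by (meson less_asym)
  show "len (refl r A \<beta> \<circ> u) \<noteq> len u"
    using SE_down[OF u] \<open>\<beta> \<notin> N u \<Longrightarrow> len u < len (refl r A \<beta> \<circ> u)\<close> by fastforce
qed

lemma descent_left: "u \<in> W \<Longrightarrow> j < r \<Longrightarrow> len (sr j \<circ> u) < len u \<longleftrightarrow> simple j \<in> N u"
  using SE_iff simple_pos by blast

lemma len_comp_le: "u \<in> W \<Longrightarrow> v \<in> W \<Longrightarrow> len (u \<circ> v) \<le> len u + len v"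
proof -
  assume u: "u \<in> W" and v: "v \<in> W"
  obtain xs where xs: "length xs = len u" "set xs \<subseteq> {..<r}" "wd xs = u" using len_ex u by metis
  obtain ys where ys: "length ys = len v" "set ys \<subseteq> {..<r}" "wd ys = v" using len_ex v by metis
  have "len (wd (xs @ ys)) \<le> length (xs @ ys)" by (rule len_le) (use xs ys in auto)
  moreover have "wd (xs @ ys) = u \<circ> v" using wd_append xs ys by simp
  ultimately show ?thesis using xs(1) ys(1) by (metis length_append)
qed

lemma len_sr: "j < r \<Longrightarrow> len (sr j) \<le> 1"
  using len_le[of "[j]"] wd_single by simp

end


context cart begin

definition Gp :: "nat \<Rightarrow> weyl \<Rightarrow> bool" where
  "Gp i u \<longleftrightarrow> (\<forall>j<r. j \<noteq> i \<longrightarrow> simple j \<notin> N u)"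

definition G :: "nat \<Rightarrow> weyl \<Rightarrow> bool" where
  "G i u \<longleftrightarrow> (\<forall>\<beta>\<in>N u. \<beta> i > 0)"

lemma G_Gp: "G i u \<Longrightarrow> Gp i u"
  unfolding G_def Gp_def by (auto simp: simple_def)

lemma Q_decomp: "Q \<beta> \<Longrightarrow> \<beta> = (\<lambda>k. \<Sum>j\<in>{..<r}. \<beta> j * simple j k)"
proof
  fix k assume q: "Q \<beta>"
  show "\<beta> k = (\<Sum>j\<in>{..<r}. \<beta> j * simple j k)"
  proof (cases "k < r")
    case True
    have "(\<Sum>j\<in>{..<r}. \<beta> j * simple j k) = (\<Sum>j\<in>{..<r}. if j = k then \<beta> j else 0)"
      by (rule sum.cong) (auto simp: simple_def)
    then show ?thesis using True by simp
  next
    case False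
    then have "\<beta> k = 0" using q unfolding inQ_def by simp
    moreover have "(\<Sum>j\<in>{..<r}. \<beta> j * simple j k) = 0"
      using False by (intro sum.neutral) (auto simp: simple_def)
    ultimately show ?thesis by simp
  qed
qed

lemma neg_has_neg: "\<delta> \<in> neg \<Longrightarrow> \<exists>k. \<delta> k < 0"
proof (rule ccontr)
  assume d: "\<delta> \<in> neg" and "\<not> (\<exists>k. \<delta> k < 0)"
  then have "\<forall>k. \<delta> k = 0" using neg_iff' by (meson antisym not_less)
  then have "\<delta> = (\<lambda>_. 0)" by auto
  then show False using root_nz neg_root d by blast
qed

lemma pos_has_pos: "\<delta> \<in> pos \<Longrightarrow> \<exists>k. \<delta> k > 0"
  using neg_has_neg[of "- \<delta>"] neg_iff by auto

lemma LC:
  assumes u: "u \<in> W" and gp: "Gp i u" and b: "\<beta> \<in> N u"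
  shows "\<beta> i > 0"
proof (rule ccontr)
  assume c: "\<not> \<beta> i > 0"
  obtain \<delta> where d: "\<delta> \<in> neg" "\<beta> = u \<delta>" using b unfolding inv_set_def by blast
  obtain v where v: "v \<in> W" "u \<circ> v = id" "v \<circ> u = id" using W_inv u by blast
  have vb: "v \<beta> = \<delta>" using d(2) fun_cong[OF v(3), of \<delta>] by simp
  have bp: "\<beta> \<in> pos" using b N_sub by blast
  have "\<beta> i \<ge> 0" using bp pos_iff by blast
  then have bi: "\<beta> i = 0" using c by simp
  have vpos: "v (simple j) \<in> pos" if j: "j < r" "j \<noteq> i" for j
  proof (rule ccontr)
    assume "v (simple j) \<notin> pos"
    then have vn: "v (simple j) \<in> neg" using W_simple_root v j by blast
    have uv: "u (v (simple j)) = simple j" using fun_cong[OF v(2), of "simple j"] by simp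
    have "simple j \<in> u ` neg" by (rule image_eqI[of _ u "v (simple j)"]) (use uv vn in auto)
    then have "simple j \<in> N u" using simple_pos[OF j(1)] unfolding inv_set_def by blast
    then show False using gp j unfolding Gp_def by blast
  qed
  have e0: "\<beta> = (\<lambda>k. \<Sum>j\<in>{..<r}. \<beta> j * simple j k)" using Q_decomp[OF root_Q[OF pos_root[OF bp]]] .
  have "v \<beta> = v (\<lambda>k. \<Sum>j\<in>{..<r}. \<beta> j * simple j k)" using e0 by (rule arg_cong)
  also have "\<dots> = (\<lambda>k. \<Sum>j\<in>{..<r}. \<beta> j * v (simple j) k)"
    by (rule lin_sum[OF W_lin[OF v(1)]]) simp
  finally have e: "v \<beta> = (\<lambda>k. \<Sum>j\<in>{..<r}. \<beta> j * v (simple j) k)" .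
  have nn: "v \<beta> k \<ge> 0" for k
  proof -
    have "(\<Sum>j\<in>{..<r}. \<beta> j * v (simple j) k) \<ge> 0"
    proof (intro sum_nonneg)
      fix j assume j: "j \<in> {..<r}"
      show "\<beta> j * v (simple j) k \<ge> 0"
      proof (cases "j = i")
        case True then show ?thesis using bi by simp
      next
        case False
        then have "v (simple j) k \<ge> 0" using vpos j pos_iff by auto
        moreover have "\<beta> j \<ge> 0" using bp pos_iff by auto
        ultimately show ?thesis by simp
      qed
    qed
    then show "v \<beta> k \<ge> 0" using e by simp
  qed
  obtain k where "\<delta> k < 0" using neg_has_neg d(1) by blast
  then show False using nn[of k] vb by simp
qed

lemma Gp_G: "u \<in> W \<Longrightarrow> Gp i u \<Longrightarrow> G i u"
  using LC unfolding G_def by blast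

definition T :: "weyl \<Rightarrow> vec set" where
  "T u = {\<beta> \<in> pos. len (refl r A \<beta> \<circ> u) + 1 = len u}"

lemma T_sub: "u \<in> W \<Longrightarrow> T u \<subseteq> N u"
  unfolding T_def using SE_iff by fastforce

lemma T_fin: "u \<in> W \<Longrightarrow> finite (T u)"
  using T_sub N_finite finite_subset by blast

lemma Dmul_eq: "Dmul r A i c u = (if u \<in> W then (\<Sum>\<beta>\<in>T u. \<beta> i * c (refl r A \<beta> \<circ> u)) else 0)"
  unfolding Dmul_def T_def by simp

definition f :: "nat \<Rightarrow> nat \<Rightarrow> weyl \<Rightarrow> int" where
  "f i k = (Dmul r A i ^^ k) chow_one"

lemma f_0: "f i 0 = chow_one" by (simp add: f_def)
lemma f_Suc: "f i (Suc k) = Dmul r A i (f i k)" by (simp add: f_def)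

lemma f_nonneg: "f i k u \<ge> 0"
proof (induction k arbitrary: u)
  case 0
  then show ?case by (simp add: f_0 chow_one_def)
next
  case (Suc k)
  have "(\<Sum>\<beta>\<in>T u. \<beta> i * f i k (refl r A \<beta> \<circ> u)) \<ge> 0"
  proof (intro sum_nonneg)
    fix \<beta> assume "\<beta> \<in> T u"
    then have "\<beta> i \<ge> 0" unfolding T_def using pos_iff by blast
    then show "\<beta> i * f i k (refl r A \<beta> \<circ> u) \<ge> 0" using Suc by simp
  qed
  then show ?case by (simp add: f_Suc Dmul_eq)
qed

lemma f_supp: "f i k u \<noteq> 0 \<Longrightarrow> u \<in> W \<and> len u = k"
proof (induction k arbitrary: u)
  case 0
  then have "u = id" by (simp add: f_0 chow_one_def split: if_splits)
  then show ?case using W_id len_id by blast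
next
  case (Suc k)
  then have uW: "u \<in> W" and s: "(\<Sum>\<beta>\<in>T u. \<beta> i * f i k (refl r A \<beta> \<circ> u)) \<noteq> 0"
    by (auto simp: f_Suc Dmul_eq split: if_splits)
  then obtain \<beta> where b: "\<beta> \<in> T u" "\<beta> i * f i k (refl r A \<beta> \<circ> u) \<noteq> 0"
    by (meson sum.neutral)
  then have "f i k (refl r A \<beta> \<circ> u) \<noteq> 0" by auto
  then have "len (refl r A \<beta> \<circ> u) = k" using Suc.IH by blast
  then show ?case using b uW unfolding T_def by simp
qed

lemma f_pos_ex:
  assumes "f i (Suc k) u > 0"
  shows "u \<in> W \<and> (\<exists>\<beta>\<in>T u. \<beta> i > 0 \<and> f i k (refl r A \<beta> \<circ> u) > 0)"
proof -
  have uW: "u \<in> W" using assms by (auto simp: f_Suc Dmul_eq split: if_splits)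
  have s: "(\<Sum>\<beta>\<in>T u. \<beta> i * f i k (refl r A \<beta> \<circ> u)) > 0" using assms uW by (simp add: f_Suc Dmul_eq)
  obtain \<beta> where b: "\<beta> \<in> T u" "\<beta> i * f i k (refl r A \<beta> \<circ> u) > 0"
  proof (rule ccontr)
    assume "\<not> thesis"
    then have "\<forall>\<beta>\<in>T u. \<beta> i * f i k (refl r A \<beta> \<circ> u) \<le> 0" using that by (meson not_less)
    then have "(\<Sum>\<beta>\<in>T u. \<beta> i * f i k (refl r A \<beta> \<circ> u)) \<le> 0" by (simp add: sum_nonpos)
    then show False using s by simp
  qed
  have "\<beta> i \<ge> 0" using b(1) unfolding T_def using pos_iff by blast
  moreover have "f i k (refl r A \<beta> \<circ> u) \<ge> 0" using f_nonneg by blast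
  ultimately have "\<beta> i > 0 \<and> f i k (refl r A \<beta> \<circ> u) > 0" using b(2)
    by (metis less_eq_int_code(1) linorder_neqE_linordered_idom mult_eq_0_iff order_le_less zero_less_mult_iff)
  then show ?thesis using uW b(1) by blast
qed

lemma F2: "f i k u > 0 \<Longrightarrow> Gp i u"
proof (induction k arbitrary: u)
  case 0
  then have "u = id" by (simp add: f_0 chow_one_def split: if_splits)
  then show ?case using N_id unfolding Gp_def by simp
next
  case (Suc k)
  obtain \<beta> where uW: "u \<in> W" and b: "\<beta> \<in> T u" "\<beta> i > 0" "f i k (refl r A \<beta> \<circ> u) > 0"
    using f_pos_ex[OF Suc.prems] by blast
  define v where "v = refl r A \<beta> \<circ> u"
  have bp: "\<beta> \<in> pos" using b unfolding T_def by blast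
  have Gv: "Gp i v" using Suc.IH b(3) v_def by blast
  have vW: "v \<in> W" and lv: "len v = k" using f_supp[of i k v] b(3) v_def by auto
  have lu: "len u = k + 1" using b(1) lv v_def unfolding T_def by simp
  have uv: "u = refl r A \<beta> \<circ> v" unfolding v_def using refl_invol_pos[OF bp] by metis
  show "Gp i u" unfolding Gp_def
  proof (intro allI impI notI)
    fix j assume j: "j < r" "j \<noteq> i" and jN: "simple j \<in> N u"
    have bj: "\<beta> \<noteq> simple j" using b(2) j by (auto simp: simple_def)
    have jNv: "simple j \<notin> N v" using Gv j unfolding Gp_def by blast
    have x: "sr j \<circ> v \<in> W" using W_comp W_sr j(1) vW by blast
    have "len (sr j \<circ> v) \<le> len v + 1" using len_comp_le[OF W_sr[OF j(1)] vW] len_sr[OF j(1)] by simp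
    moreover have "\<not> len (sr j \<circ> v) < len v" using descent_left[OF vW j(1)] jNv by blast
    moreover have "len (sr j \<circ> v) \<noteq> len v" using SE_iff(2)[OF vW simple_pos[OF j(1)]] by blast
    ultimately have lx: "len (sr j \<circ> v) = k + 1" using lv by simp
    define \<gamma> where "\<gamma> = sr j \<beta>"
    have gp: "\<gamma> \<in> pos" using sr_pos[OF j(1) bp bj] \<gamma>_def by blast
    have "refl r A \<gamma> \<circ> sr j = sr j \<circ> refl r A \<beta>" using W_conj'[OF W_sr[OF j(1)]] \<gamma>_def by simp
    then have e: "sr j \<circ> u = refl r A \<gamma> \<circ> (sr j \<circ> v)" using uv by (metis comp_assoc)
    have "len (sr j \<circ> u) < len u" using descent_left[OF uW j(1)] jN by blast
    then have "len (refl r A \<gamma> \<circ> (sr j \<circ> v)) < len (sr j \<circ> v)" using e lx lu by simp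
    then have "\<gamma> \<in> N (sr j \<circ> v)" using SE_iff(1)[OF x gp] by blast
    then obtain \<epsilon> where eps: "\<epsilon> \<in> neg" "\<gamma> = sr j (v \<epsilon>)" unfolding inv_set_def by auto
    then have "v \<epsilon> = \<beta>" using \<gamma>_def sr_invol1[OF j(1)] by metis
    then have "\<beta> \<in> N v" using eps bp unfolding inv_set_def by blast
    moreover have "\<not> len (refl r A \<beta> \<circ> v) < len v" using uv lu lv by simp
    ultimately show False using SE_iff(1)[OF vW bp] by blast
  qed
qed

lemma F3: "u \<in> W \<Longrightarrow> G i u \<Longrightarrow> len u = k \<Longrightarrow> f i k u > 0"
proof (induction k arbitrary: u)
  case 0
  then have "u = id" using len0 by blast
  then show ?case by (simp add: f_0 chow_one_def id_def)
next
  case (Suc k)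
  obtain t where t: "t < r" "u (simple t) \<in> neg" using exists_descent[OF Suc.prems(1)] Suc.prems(3) by auto
  define u' where "u' = u \<circ> sr t"
  have u'W: "u' \<in> W" using W_comp W_sr Suc.prems t u'_def by blast
  have lu': "len u' = k" using len_right_down[OF Suc.prems(1) t] Suc.prems u'_def by simp
  have Nu': "N u' \<subseteq> N u" using N_right_down(1)[OF Suc.prems(1) t] u'_def by simp
  have Gu': "G i u'" using Suc.prems(2) Nu' unfolding G_def by blast
  have fu': "f i k u' > 0" using Suc.IH u'W Gu' lu' by blast
  define \<gamma> where "\<gamma> = - u (simple t)"
  have gN: "\<gamma> \<in> N u" using N_right_down(2)[OF Suc.prems(1) t] \<gamma>_def by simp
  have gp: "\<gamma> \<in> pos" using gN N_sub by blast
  have gi: "\<gamma> i > 0" using gN Suc.prems(2) unfolding G_def by blast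
  have "refl r A \<gamma> \<circ> u = u'"
    using refl_uminus W_conj'[OF Suc.prems(1)] \<gamma>_def u'_def by simp
  then have gT: "\<gamma> \<in> T u" using gp lu' Suc.prems(3) unfolding T_def by simp
  have nn: "\<forall>\<beta>\<in>T u. \<beta> i * f i k (refl r A \<beta> \<circ> u) \<ge> 0"
    using f_nonneg pos_iff unfolding T_def by auto
  have "\<gamma> i * f i k (refl r A \<gamma> \<circ> u) \<le> (\<Sum>\<beta>\<in>T u. \<beta> i * f i k (refl r A \<beta> \<circ> u))"
    by (rule member_le_sum[OF gT]) (use nn T_fin[OF Suc.prems(1)] in auto)
  moreover have "\<gamma> i * f i k (refl r A \<gamma> \<circ> u) > 0"
    using gi fu' \<open>refl r A \<gamma> \<circ> u = u'\<close> by simp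
  ultimately show ?case using Suc.prems(1) by (simp add: f_Suc Dmul_eq)
qed

lemma Ccoef_f_aux:
  "distinct xs \<Longrightarrow> foldr (\<lambda>j c. (Dmul r A j ^^ (if j = i then n else 0)) c) xs c0
     = (if i \<in> set xs then (Dmul r A i ^^ n) c0 else c0)"
  by (induction xs) auto

lemma Ccoef_f: "i < r \<Longrightarrow> Ccoef r A w (\<lambda>j. if j = i then n else 0) = f i n w"
  unfolding Ccoef_def f_def using Ccoef_f_aux[of "[0..<r]" i n chow_one] by simp

end


definition psum :: "nat list \<Rightarrow> vec" where
  "psum xs = (\<lambda>j. \<Sum>x\<leftarrow>xs. simple x j)"

lemma psum_Nil: "psum [] = (\<lambda>_. 0)" by (simp add: psum_def)
lemma psum_Cons: "psum (x # xs) = (\<lambda>j. simple x j + psum xs j)" by (simp add: psum_def)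
lemma psum_append: "psum (xs @ ys) = (\<lambda>j. psum xs j + psum ys j)" by (simp add: psum_def)
lemma psum_snoc: "psum (xs @ [x]) = (\<lambda>j. psum xs j + simple x j)" by (simp add: psum_def)
lemma psum_single: "psum [x] = simple x" by (simp add: psum_def)

lemma psum_distinct: "distinct xs \<Longrightarrow> psum xs j = (if j \<in> set xs then 1 else 0)"
  by (induction xs) (auto simp: psum_Nil psum_Cons simple_def)

lemma psum_notin: "j \<notin> set xs \<Longrightarrow> psum xs j = 0"
  by (induction xs) (auto simp: psum_Nil psum_Cons simple_def)

lemma psum_nonneg: "psum xs j \<ge> 0"
  by (induction xs) (auto simp: psum_Nil psum_Cons simple_def)

lemma psum_height: "(\<Sum>j<r. psum xs j) = (\<Sum>x\<leftarrow>xs. \<Sum>j<r. simple x j)"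
  by (induction xs) (auto simp: psum_Nil psum_Cons sum.distrib)

lemma simple_height: "x < r \<Longrightarrow> (\<Sum>j<r. simple x j) = 1"
proof -
  assume x: "x < r"
  have "(\<Sum>j<r. simple x j) = (\<Sum>j<r. if j = x then 1 else 0)" by (rule sum.cong) (auto simp: simple_def)
  then show ?thesis using x by simp
qed

lemma psum_height': "set xs \<subseteq> {..<r} \<Longrightarrow> (\<Sum>j<r. psum xs j) = int (length xs)"
  unfolding psum_height by (induction xs) (auto simp: simple_height)

context cart begin

definition ispath :: "nat list \<Rightarrow> bool" where
  "ispath is \<longleftrightarrow> (\<forall>t<length is. is ! t < r) \<and>
     (\<forall>t. t + 1 < length is \<longrightarrow> A (is ! t) (is ! (t + 1)) = -1) \<and>
     (\<forall>t t'. t < length is \<and> t' < length is \<and> (t' > t + 1 \<or> t > t' + 1) \<longrightarrow> A (is ! t) (is ! t') = 0)"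

lemma ispath_lt: "ispath is \<Longrightarrow> t < length is \<Longrightarrow> is ! t < r"
  unfolding ispath_def by blast
lemma ispath_adj: "ispath is \<Longrightarrow> t + 1 < length is \<Longrightarrow> A (is ! t) (is ! (t + 1)) = -1"
  unfolding ispath_def by blast
lemma ispath_far: "ispath is \<Longrightarrow> t < length is \<Longrightarrow> t' < length is \<Longrightarrow> t' > t + 1 \<or> t > t' + 1 \<Longrightarrow> A (is ! t) (is ! t') = 0"
  unfolding ispath_def by blast
lemma ispath_set: "ispath is \<Longrightarrow> set is \<subseteq> {..<r}"
  unfolding ispath_def by (auto simp: in_set_conv_nth)

lemma ispath_distinct: "ispath is \<Longrightarrow> distinct is"
proof (unfold distinct_conv_nth, intro allI impI)
  fix t t' assume p: "ispath is" and tt: "t < length is" "t' < length is" "t \<noteq> t'"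
  show "is ! t \<noteq> is ! t'"
  proof
    assume e: "is ! t = is ! t'"
    have a2: "A (is ! t) (is ! t') = 2" using e A_diag ispath_lt[OF p tt(2)] by simp
    consider "t' = t + 1" | "t = t' + 1" | "t' > t + 1 \<or> t > t' + 1" using tt(3) by linarith
    then show False
    proof cases
      case 1 then show False using ispath_adj[OF p] tt a2 by force
    next
      case 2 then have "A (is ! t') (is ! t) = -1" using ispath_adj[OF p] tt by force
      then show False using a2 e by simp
    next
      case 3 then show False using ispath_far[OF p tt(1,2)] a2 by simp
    qed
  qed
qed

lemma ispath_take: "ispath is \<Longrightarrow> ispath (take k is)"
  unfolding ispath_def by auto

lemma ispath_drop: "ispath is \<Longrightarrow> ispath (drop k is)"
proof -
  assume p: "ispath is"
  show ?thesis unfolding ispath_def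
  proof (intro conjI allI impI)
    fix t assume "t < length (drop k is)"
    then show "drop k is ! t < r" using ispath_lt[OF p] by auto
  next
    fix t assume "t + 1 < length (drop k is)"
    then show "A (drop k is ! t) (drop k is ! (t + 1)) = -1" using ispath_adj[OF p, of "k + t"]
      by (simp add: add.assoc)
  next
    fix t t' assume "t < length (drop k is) \<and> t' < length (drop k is) \<and> (t' > t + 1 \<or> t > t' + 1)"
    then show "A (drop k is ! t) (drop k is ! t') = 0" using ispath_far[OF p, of "k + t" "k + t'"] by auto
  qed
qed

lemma ispath_Nil: "ispath []" unfolding ispath_def by simp
lemma ispath_single: "j < r \<Longrightarrow> ispath [j]" unfolding ispath_def by simp

lemma ispath_snocI:
  assumes p: "ispath is" and j: "j < r"
    and l: "is \<noteq> [] \<Longrightarrow> A (last is) j = -1"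
    and f: "\<And>t. t + 1 < length is \<Longrightarrow> A (is ! t) j = 0"
  shows "ispath (is @ [j])"
  unfolding ispath_def
proof (intro conjI allI impI)
  fix t assume "t < length (is @ [j])"
  then show "(is @ [j]) ! t < r" using ispath_lt[OF p] j by (auto simp: nth_append)
next
  fix t assume t: "t + 1 < length (is @ [j])"
  show "A ((is @ [j]) ! t) ((is @ [j]) ! (t + 1)) = -1"
  proof (cases "t + 1 < length is")
    case True then show ?thesis using ispath_adj[OF p True] by (simp add: nth_append)
  next
    case False
    then have "t + 1 = length is" using t by simp
    then have ne: "is \<noteq> []" by auto
    have "t = length is - 1" using \<open>t + 1 = length is\<close> by simp
    then have "is ! t = last is" using ne by (simp add: last_conv_nth)
    note ne this
    then show ?thesis using l \<open>t + 1 = length is\<close> by (simp add: nth_append)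
  qed
next
  fix t t' assume tt: "t < length (is @ [j]) \<and> t' < length (is @ [j]) \<and> (t' > t + 1 \<or> t > t' + 1)"
  show "A ((is @ [j]) ! t) ((is @ [j]) ! t') = 0"
  proof (cases "t < length is \<and> t' < length is")
    case True then show ?thesis using ispath_far[OF p] tt by (simp add: nth_append)
  next
    case False
    then consider "t = length is" "t' + 1 < length is" | "t' = length is" "t + 1 < length is"
      using tt by auto
    then show ?thesis
    proof cases
      case 1
      then have "A j (is ! t') = A (is ! t') j" using A_sym j ispath_lt[OF p, of t'] by simp
      then show ?thesis using 1 f by (simp add: nth_append)
    next
      case 2
      then show ?thesis using f by (simp add: nth_append)
    qed
  qed
qed

lemma ispath_Cons_sum:
  assumes p: "ispath (x # ys)" and ne: "ys \<noteq> []"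
  shows "(\<Sum>y\<leftarrow>ys. A y x) = -1"
proof -
  have x: "x < r" using ispath_lt[OF p, of 0] by simp
  have yr: "ys ! t < r" if "t < length ys" for t using ispath_lt[OF p, of "Suc t"] that by simp
  have s: "(\<Sum>y\<leftarrow>ys. A y x) = (\<Sum>t\<in>{0..<length ys}. A (ys ! t) x)"
    by (simp add: sum_list_sum_nth)
  have "(\<Sum>t\<in>{0..<length ys}. A (ys ! t) x) = (\<Sum>t\<in>{0..<length ys}. if t = 0 then -1 else 0)"
  proof (rule sum.cong)
    fix t assume t: "t \<in> {0..<length ys}"
    show "A (ys ! t) x = (if t = 0 then -1 else 0)"
    proof (cases "t = 0")
      case True
      have "A x (ys ! 0) = -1" using ispath_adj[OF p, of 0] ne by simp
      then show ?thesis using True A_sym x yr ne by simp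
    next
      case False
      have "A x (ys ! t) = 0" using ispath_far[OF p, of 0 "Suc t"] t False by simp
      then show ?thesis using False A_sym x yr t by simp
    qed
  qed simp
  also have "\<dots> = -1" using ne by simp
  finally show ?thesis using s by simp
qed

lemma B_psum: "set xs \<subseteq> {..<r} \<Longrightarrow> B (psum xs) v = (\<Sum>x\<leftarrow>xs. B (simple x) v)"
proof (induction xs)
  case Nil
  then show ?case using B_zero1 psum_Nil by simp
next
  case (Cons x xs)
  then show ?case using B_add1 psum_Cons by simp
qed

lemma B_psum_simple: "set xs \<subseteq> {..<r} \<Longrightarrow> a < r \<Longrightarrow> B (psum xs) (simple a) = (\<Sum>x\<leftarrow>xs. A x a)"
proof -
  assume xs: "set xs \<subseteq> {..<r}" and a: "a < r"
  have "(\<Sum>x\<leftarrow>xs. B (simple x) (simple a)) = (\<Sum>x\<leftarrow>xs. A x a)"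
    using xs a B_simple by (intro arg_cong[where f = sum_list] map_cong) auto
  then show ?thesis using B_psum[OF xs] by simp
qed

lemma PC: "ispath (p @ [a]) \<Longrightarrow> wd p (simple a) = psum (p @ [a])"
proof (induction p)
  case Nil
  then show ?case by (simp add: wd_Nil psum_single)
next
  case (Cons x p)
  have p': "ispath (p @ [a])" using ispath_drop[OF Cons.prems, of 1] by simp
  have IH: "wd p (simple a) = psum (p @ [a])" using Cons.IH p' by blast
  have x: "x < r" using ispath_lt[OF Cons.prems, of 0] by simp
  have set: "set (p @ [a]) \<subseteq> {..<r}" using ispath_set[OF p'] .
  have "B (psum (p @ [a])) (simple x) = -1"
    using B_psum_simple[OF set x] ispath_Cons_sum[of x "p @ [a]"] Cons.prems by simp
  then have "sr x (psum (p @ [a])) = (\<lambda>j. psum (p @ [a]) j + simple x j)"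
    by (simp add: refl_def)
  then show ?case using IH by (simp add: wd_Cons psum_Cons add.commute)
qed

lemma psum_Q: "set xs \<subseteq> {..<r} \<Longrightarrow> Q (psum xs)"
  unfolding inQ_def by (induction xs) (auto simp: psum_Nil psum_Cons simple_def)

lemma path_pos: "ispath ps \<Longrightarrow> ps \<noteq> [] \<Longrightarrow> psum ps \<in> pos"
proof -
  assume p: "ispath ps" and ne: "ps \<noteq> []"
  obtain q a where qa: "ps = q @ [a]" using ne by (metis rev_exhaust)
  have "psum ps = wd q (simple a)" using PC p qa by simp
  moreover have "wd q \<in> W" using wd_W ispath_set[OF p] qa by simp
  moreover have "a < r" using ispath_set[OF p] qa by simp
  ultimately have "psum ps \<in> rts" using W_root simple_root by simp
  then show ?thesis using pos_iff psum_nonneg by blast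
qed

end


definition bs_of :: "nat list \<Rightarrow> vec list" where
  "bs_of is = map (\<lambda>k. psum (take k is)) [0..<length is + 1]"

context cart begin

lemma len_id': "len (\<lambda>a. a) = 0" using len_id by (simp add: id_def)

lemma path_elem:
  assumes p: "ispath is"
  shows "k \<le> length is \<Longrightarrow> len (wd (take k is)) = k \<and> N (wd (take k is)) = {psum (take t is) | t. t \<in> {1..k}}"
proof (induction k)
  case 0
  then show ?case using len_id' N_id' wd_Nil by (simp add: id_def)
next
  case (Suc k)
  then have k: "k < length is" by simp
  have tk: "take (Suc k) is = take k is @ [is ! k]" using k by (simp add: take_Suc_conv_app_nth)
  have pk: "ispath (take k is @ [is ! k])" using ispath_take[OF p, of "Suc k"] tk by simp
  have uW: "wd (take k is) \<in> W" using wd_W ispath_set[OF ispath_take[OF p]] by blast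
  have a: "is ! k < r" using ispath_lt[OF p k] .
  have e: "wd (take k is) (simple (is ! k)) = psum (take (Suc k) is)" using PC[OF pk] tk by simp
  have "is \<noteq> []" using k by auto
  then have ep: "psum (take (Suc k) is) \<in> pos" using path_pos[OF ispath_take[OF p, of "Suc k"]] k by simp
  have IH: "len (wd (take k is)) = k" "N (wd (take k is)) = {psum (take t is) | t. t \<in> {1..k}}"
    using Suc k by auto
  have w: "wd (take (Suc k) is) = wd (take k is) \<circ> sr (is ! k)" using tk wd_snoc by simp
  have "len (wd (take (Suc k) is)) = Suc k" using len_right_up[OF uW a] e ep IH w by simp
  moreover have "N (wd (take (Suc k) is)) = insert (psum (take (Suc k) is)) (N (wd (take k is)))"
    using N_right_up(1)[OF uW a] e ep w by simp
  moreover have "insert (psum (take (Suc k) is)) {psum (take t is) | t. t \<in> {1..k}} = {psum (take t is) | t. t \<in> {1..Suc k}}"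
    by (auto simp: le_Suc_eq)
  ultimately show ?case using IH by simp
qed

lemma path_len: "ispath is \<Longrightarrow> len (wd is) = length is"
  using path_elem[of "is" "length is"] by simp

lemma path_N: "ispath is \<Longrightarrow> N (wd is) = {psum (take t is) | t. t \<in> {1..length is}}"
  using path_elem[of "is" "length is"] by simp

lemma bs_of_nth: "k \<le> length is \<Longrightarrow> bs_of is ! k = psum (take k is)"
  unfolding bs_of_def by (simp add: nth_append del: upt_Suc)

lemma bs_of_length: "length (bs_of is) = length is + 1"
  unfolding bs_of_def by simp

lemma fold_refl_prod:
  assumes p: "ispath is"
  shows "k \<le> length is \<Longrightarrow> fold (\<lambda>\<beta> f. refl r A \<beta> \<circ> f) (map (\<lambda>k. psum (take k is)) [1..<k + 1]) id = wd (take k is)"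
proof (induction k)
  case 0
  then show ?case by (simp add: wd_Nil)
next
  case (Suc k)
  then have k: "k < length is" by simp
  have tk: "take (Suc k) is = take k is @ [is ! k]" using k by (simp add: take_Suc_conv_app_nth)
  have pk: "ispath (take k is @ [is ! k])" using ispath_take[OF p, of "Suc k"] tk by simp
  have uW: "wd (take k is) \<in> W" using wd_W ispath_set[OF ispath_take[OF p]] by blast
  have e: "psum (take (Suc k) is) = wd (take k is) (simple (is ! k))" using PC[OF pk] tk by simp
  have u: "[1..<Suc k + 1] = [1..<k + 1] @ [Suc k]" by simp
  have "fold (\<lambda>\<beta> f. refl r A \<beta> \<circ> f) (map (\<lambda>k. psum (take k is)) ([1..<k + 1] @ [Suc k])) id
      = refl r A (psum (take (Suc k) is)) \<circ> fold (\<lambda>\<beta> f. refl r A \<beta> \<circ> f) (map (\<lambda>k. psum (take k is)) [1..<k + 1]) id"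
    by (simp only: map_append fold_append list.map fold_Cons fold_Nil comp_apply id_apply)
  also have "fold (\<lambda>\<beta> f. refl r A \<beta> \<circ> f) (map (\<lambda>k. psum (take k is)) [1..<k + 1]) id = wd (take k is)"
    by (rule Suc.IH[OF less_imp_le[OF k]])
  finally have "fold (\<lambda>\<beta> f. refl r A \<beta> \<circ> f) (map (\<lambda>k. psum (take k is)) [1..<Suc k + 1]) id
      = refl r A (psum (take (Suc k) is)) \<circ> wd (take k is)"
    by (simp only: u)
  also have "\<dots> = wd (take k is) \<circ> sr (is ! k)" using e W_conj'[OF uW] by simp
  also have "\<dots> = wd (take (Suc k) is)" using tk wd_snoc by simp
  finally show ?case .
qed

lemma refl_prod_path: "ispath is \<Longrightarrow> refl_prod r A (bs_of is) = wd is"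
proof -
  assume p: "ispath is"
  have "[0..<length is + 1] = 0 # [1..<length is + 1]" using upt_conv_Cons[of 0 "length is + 1"] by simp
  then have "tl (bs_of is) = map (\<lambda>k. psum (take k is)) [1..<length is + 1]"
    unfolding bs_of_def by simp
  then show ?thesis unfolding refl_prod_def using fold_refl_prod[OF p, of "length is"] by simp
qed

lemma path_originating_bs_of:
  assumes p: "ispath is"
  shows "path_originating r A (bs_of is)"
  unfolding path_originating_def
proof (intro conjI)
  show "bs_of is \<noteq> []" using bs_of_length by (metis add_is_0 length_0_conv one_neq_zero)
  show "bs_of is ! 0 = (\<lambda>_. 0)" using bs_of_nth[of 0] psum_Nil by simp
  show "\<forall>j\<in>{1..<length (bs_of is)}. bs_of is ! j \<in> pos"
  proof
    fix j assume "j \<in> {1..<length (bs_of is)}"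
    then have j: "1 \<le> j" "j \<le> length is" using bs_of_length by auto
    then have "is \<noteq> []" by auto
    then have "take j is \<noteq> []" using j by simp
    then show "bs_of is ! j \<in> pos" using path_pos[OF ispath_take[OF p]] bs_of_nth j by simp
  qed
  show "\<exists>is'. length is' + 1 = length (bs_of is) \<and>
        (\<forall>t<length is'. is' ! t < r \<and> bs_of is ! (t + 1) = (\<lambda>m. (bs_of is ! t) m + simple (is' ! t) m)) \<and>
        (\<forall>t. t + 1 < length is' \<longrightarrow> B (simple (is' ! t)) (simple (is' ! (t + 1))) = -1) \<and>
        (\<forall>t t'. t < length is' \<and> t' < length is' \<and> (t' > t + 1 \<or> t > t' + 1) \<longrightarrow>
            B (simple (is' ! t)) (simple (is' ! t')) = 0)"
  proof (intro exI[of _ "is"] conjI allI impI)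
    show "length is + 1 = length (bs_of is)" using bs_of_length by simp
  next
    fix t assume t: "t < length is"
    show "is ! t < r" using ispath_lt[OF p t] .
    have "take (t + 1) is = take t is @ [is ! t]" using t by (simp add: take_Suc_conv_app_nth)
    then show "bs_of is ! (t + 1) = (\<lambda>m. (bs_of is ! t) m + simple (is ! t) m)"
      using bs_of_nth[of "t + 1"] bs_of_nth[of t] t psum_snoc by simp
  next
    fix t assume t: "t + 1 < length is"
    then show "B (simple (is ! t)) (simple (is ! (t + 1))) = -1"
      using B_simple ispath_lt[OF p] ispath_adj[OF p t] by simp
  next
    fix t t' assume t: "t < length is \<and> t' < length is \<and> (t' > t + 1 \<or> t > t' + 1)"
    then show "B (simple (is ! t)) (simple (is ! t')) = 0"
      using B_simple ispath_lt[OF p] ispath_far[OF p] by simp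
  qed
qed

lemma path_originating_ex:
  assumes po: "path_originating r A bs"
  shows "\<exists>is. ispath is \<and> bs = bs_of is"
proof -
  obtain "is" where l: "length is + 1 = length bs"
    and st: "\<forall>t<length is. is ! t < r \<and> bs ! (t + 1) = (\<lambda>m. (bs ! t) m + simple (is ! t) m)"
    and adj: "\<forall>t. t + 1 < length is \<longrightarrow> B (simple (is ! t)) (simple (is ! (t + 1))) = -1"
    and far: "\<forall>t t'. t < length is \<and> t' < length is \<and> (t' > t + 1 \<or> t > t' + 1) \<longrightarrow>
            B (simple (is ! t)) (simple (is ! t')) = 0"
    using po unfolding path_originating_def by blast
  have b0: "bs ! 0 = (\<lambda>_. 0)" using po unfolding path_originating_def by blast
  have p: "ispath is" unfolding ispath_def
  proof (intro conjI allI impI)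
    fix t assume "t < length is" then show "is ! t < r" using st by blast
  next
    fix t assume t: "t + 1 < length is"
    then show "A (is ! t) (is ! (t + 1)) = -1" using adj B_simple st by force
  next
    fix t t' assume t: "t < length is \<and> t' < length is \<and> (t' > t + 1 \<or> t > t' + 1)"
    then show "A (is ! t) (is ! t') = 0" using far B_simple st by force
  qed
  have bk: "k \<le> length is \<Longrightarrow> bs ! k = psum (take k is)" for k
  proof (induction k)
    case 0 then show ?case using b0 psum_Nil by simp
  next
    case (Suc k)
    then have k: "k < length is" by simp
    have "take (Suc k) is = take k is @ [is ! k]" using k by (simp add: take_Suc_conv_app_nth)
    then show ?case using st k Suc psum_snoc by simp
  qed
  have "bs = bs_of is"
    by (rule nth_equalityI) (use l bs_of_length bs_of_nth bk in auto)
  then show ?thesis using p by blast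
qed

lemma path_coord:
  assumes p: "ispath is" and i0: "is ! 0 = i" and t: "1 \<le> t" "t \<le> length is"
  shows "psum (take t is) i = 1"
proof -
  have d: "distinct (take t is)" using ispath_distinct[OF ispath_take[OF p]] .
  have "i \<in> set (take t is)" using i0 t by (metis One_nat_def Suc_le_eq in_set_conv_nth length_take min.absorb2 nth_take)
  then show ?thesis using psum_distinct[OF d] by simp
qed

lemma sr_B_simple: "a < r \<Longrightarrow> B (simple a) (sr a y) = - B (simple a) y"
proof -
  assume a: "a < r"
  have "B (simple a) (sr a y) = B (sr a (simple a)) (sr a (sr a y))"
    using refl_pres[OF B_simple_self[OF a]] by simp
  also have "\<dots> = B (- simple a) y" using sr_simple[OF a] sr_invol1[OF a] by simp
  finally show ?thesis using B_neg1 by simp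
qed

lemma B_path_pair:
  assumes p: "ispath ps" and kl: "k < l" "l < length ps"
  shows "B (psum (take (Suc k) ps)) (psum (take (Suc l) ps)) = 1"
proof -
  define pp where "pp = take k ps"
  define a where "a = ps ! k"
  define mid where "mid = drop (Suc k) (take l ps)"
  define b where "b = ps ! l"
  have a_r: "a < r" using ispath_lt[OF p] kl a_def by simp
  have tk: "take (Suc k) ps = pp @ [a]" using kl unfolding pp_def a_def by (simp add: take_Suc_conv_app_nth)
  have tl1: "take l ps = pp @ a # mid"
  proof -
    have "take l ps = take (Suc k) (take l ps) @ drop (Suc k) (take l ps)" by (rule append_take_drop_id[symmetric])
    moreover have "take (Suc k) (take l ps) = take (Suc k) ps" using kl by (simp add: min_def)
    ultimately show ?thesis using tk mid_def by simp
  qed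
  have tl: "take (Suc l) ps = pp @ a # mid @ [b]"
    using kl tl1 unfolding b_def by (simp add: take_Suc_conv_app_nth)
  have dr: "drop k (take (Suc l) ps) = a # mid @ [b]" using tl pp_def kl by (simp add: min_def)
  have pl: "ispath (take (Suc l) ps)" using ispath_take[OF p] .
  have pAM: "ispath (a # mid @ [b])" using ispath_drop[OF pl, of k] dr by simp
  have pMB: "ispath (mid @ [b])" using ispath_drop[OF pAM, of 1] by simp
  have WW: "wd pp \<in> W" using wd_W ispath_set[OF ispath_take[OF p]] pp_def by blast
  have ppa: "ispath (pp @ [a])" using ispath_take[OF p, of "Suc k"] tk by simp
  have beta: "psum (take (Suc k) ps) = wd pp (simple a)" using PC[OF ppa] tk by simp
  have ppb: "ispath ((pp @ a # mid) @ [b])" using pl tl by simp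
  have gamma: "psum (take (Suc l) ps) = wd pp (sr a (wd mid (simple b)))"
    using PC[OF ppb] tl by (simp add: wd_append wd_Cons)
  have "B (psum (take (Suc k) ps)) (psum (take (Suc l) ps)) = B (simple a) (sr a (wd mid (simple b)))"
    using beta gamma W_pres[OF WW] by simp
  also have "\<dots> = - B (simple a) (psum (mid @ [b]))" using sr_B_simple[OF a_r] PC[OF pMB] by simp
  also have "\<dots> = - (\<Sum>y\<leftarrow>mid @ [b]. A y a)"
    using B_psum_simple[OF ispath_set[OF pMB] a_r] B_sym by simp
  also have "\<dots> = 1" using ispath_Cons_sum[OF pAM] by simp
  finally show ?thesis .
qed

lemma path_props:
  assumes p: "ispath is" and i0: "length is > 0 \<longrightarrow> is ! 0 = i"
  shows "\<forall>\<beta>\<in>N (wd is). \<beta> i = 1"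
    and "\<forall>\<beta>\<in>N (wd is). \<forall>\<gamma>\<in>N (wd is). \<beta> \<noteq> \<gamma> \<longrightarrow> B \<beta> \<gamma> = 1"
proof -
  show "\<forall>\<beta>\<in>N (wd is). \<beta> i = 1"
    using path_N[OF p] path_coord[OF p] i0 by fastforce
  show "\<forall>\<beta>\<in>N (wd is). \<forall>\<gamma>\<in>N (wd is). \<beta> \<noteq> \<gamma> \<longrightarrow> B \<beta> \<gamma> = 1"
  proof (intro ballI impI)
    fix \<beta> \<gamma> assume b: "\<beta> \<in> N (wd is)" and g: "\<gamma> \<in> N (wd is)" and ne: "\<beta> \<noteq> \<gamma>"
    obtain t where t: "t \<in> {1..length is}" "\<beta> = psum (take t is)" using b path_N[OF p] by blast
    obtain t' where t': "t' \<in> {1..length is}" "\<gamma> = psum (take t' is)" using g path_N[OF p] by blast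
    obtain k where k: "t = Suc k" using t by (metis Suc_pred atLeastAtMost_iff le_zero_eq not_one_le_zero not_gr_zero)
    obtain l where l: "t' = Suc l" using t' by (metis Suc_pred atLeastAtMost_iff le_zero_eq not_one_le_zero not_gr_zero)
    have "k \<noteq> l" using ne t t' k l by auto
    then consider "k < l" | "l < k" by linarith
    then show "B \<beta> \<gamma> = 1"
    proof cases
      case 1 then show ?thesis using B_path_pair[OF p 1] t t' k l by simp
    next
      case 2 then show ?thesis using B_path_pair[OF p 2] t t' k l B_sym by simp
    qed
  qed
qed

end


lemma sum_list_nonpos_int: "(\<And>x. x \<in> set xs \<Longrightarrow> g x \<le> 0) \<Longrightarrow> sum_list (map g xs) \<le> (0::int)"
  by (induction xs) (auto simp: add_nonpos_nonpos)

context cart begin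

lemma sr_sr: "a < r \<Longrightarrow> b < r \<Longrightarrow> A b a = 0 \<Longrightarrow>
   sr a (sr b v) = (\<lambda>j. v j - B v (simple b) * simple b j - B v (simple a) * simple a j)"
proof -
  assume a: "a < r" and b: "b < r" and ab: "A b a = 0"
  have "B (\<lambda>j. v j - B v (simple b) * simple b j) (simple a) = B v (simple a) - B v (simple b) * B (simple b) (simple a)"
    by (simp only: B_diff1 B_smul1)
  also have "\<dots> = B v (simple a)" using B_simple[OF b a] ab by simp
  finally have e: "B (\<lambda>j. v j - B v (simple b) * simple b j) (simple a) = B v (simple a)" .
  show ?thesis by (simp add: refl_def e)
qed

lemma sr_comm: "a < r \<Longrightarrow> b < r \<Longrightarrow> A a b = 0 \<Longrightarrow> sr a \<circ> sr b = sr b \<circ> sr a"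
proof -
  assume a: "a < r" and b: "b < r" and ab: "A a b = 0"
  have ba: "A b a = 0" using ab A_sym a b by simp
  have "sr a (sr b v) = sr b (sr a v)" for v
    by (simp only: sr_sr[OF a b ba] sr_sr[OF b a ab]) (auto simp: fun_eq_iff algebra_simps)
  then show ?thesis by (simp add: fun_eq_iff)
qed

lemma wd_comm: "b < r \<Longrightarrow> (\<forall>y\<in>set p. y < r \<and> A y b = 0) \<Longrightarrow> sr b \<circ> wd p = wd p \<circ> sr b"
proof (induction p)
  case Nil
  then show ?case by (simp add: wd_Nil)
next
  case (Cons y p)
  then have y: "y < r" "A y b = 0" by auto
  have IH: "sr b \<circ> wd p = wd p \<circ> sr b" by (rule Cons.IH) (use Cons.prems in auto)
  have "A b y = 0" using y A_sym Cons.prems(1) by simp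
  then have c: "sr b \<circ> sr y = sr y \<circ> sr b" using sr_comm[OF Cons.prems(1) y(1)] by simp
  have "sr b \<circ> wd (y # p) = (sr b \<circ> sr y) \<circ> wd p" by (simp add: wd_Cons comp_assoc)
  also have "\<dots> = sr y \<circ> (sr b \<circ> wd p)" using c by (simp add: comp_assoc)
  also have "\<dots> = wd (y # p) \<circ> sr b" using IH by (simp add: wd_Cons comp_assoc)
  finally show ?case .
qed

lemma braid: "a < r \<Longrightarrow> b < r \<Longrightarrow> A a b = -1 \<Longrightarrow> sr a \<circ> sr b \<circ> sr a = sr b \<circ> sr a \<circ> sr b"
proof -
  assume a: "a < r" and b: "b < r" and ab: "A a b = -1"
  have ba: "A b a = -1" using ab A_sym a b by simp
  have h: "sr x \<circ> sr y \<circ> sr x = refl r A (sr x (simple y))" if x: "x < r" and "y < r" for x y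
  proof -
    have "refl r A (sr x (simple y)) \<circ> sr x = sr x \<circ> sr y" using W_conj'[OF W_sr[OF x]] by simp
    then have "refl r A (sr x (simple y)) \<circ> (sr x \<circ> sr x) = sr x \<circ> sr y \<circ> sr x" by (metis comp_assoc)
    then show ?thesis using sr_invol[OF x] by simp
  qed
  have e1: "sr a (simple b) = (\<lambda>j. simple b j + simple a j)" using B_simple[OF b a] ba by (simp add: refl_def)
  have e2: "sr b (simple a) = (\<lambda>j. simple a j + simple b j)" using B_simple[OF a b] ab by (simp add: refl_def)
  have "sr a (simple b) = sr b (simple a)" using e1 e2 by (simp add: fun_eq_iff add.commute)
  then show ?thesis using h[OF a b] h[OF b a] by simp
qed

lemma sr_inj: "t < r \<Longrightarrow> j < r \<Longrightarrow> sr t = sr j \<Longrightarrow> t = j"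
proof (rule ccontr)
  assume t: "t < r" and j: "j < r" and e: "sr t = sr j" and ne: "t \<noteq> j"
  have "sr t (simple t) t = -1" using sr_simple[OF t] by (simp add: simple_def)
  moreover have "sr j (simple t) t = 1" using ne by (simp add: refl_def simple_def)
  ultimately show False using e by simp
qed

definition Pth :: "nat \<Rightarrow> weyl \<Rightarrow> bool" where
  "Pth i w \<longleftrightarrow> (\<exists>is. ispath is \<and> length is = len w \<and> (is \<noteq> [] \<longrightarrow> is ! 0 = i) \<and> w = wd is)"

lemma path_decomp:
  assumes t: "Suc t < length ps"
  shows "ps = take t ps @ ps ! t # ps ! Suc t # drop (Suc (Suc t)) ps"
proof -
  have "drop t ps = ps ! t # drop (Suc t) ps" using t by (simp add: Cons_nth_drop_Suc)
  moreover have "drop (Suc t) ps = ps ! Suc t # drop (Suc (Suc t)) ps" using t by (simp add: Cons_nth_drop_Suc)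
  ultimately show ?thesis by (metis append_take_drop_id)
qed

lemma f_path:
  "ispath ps \<Longrightarrow> (ps \<noteq> [] \<longrightarrow> ps ! 0 = i) \<Longrightarrow> f i (length ps) (wd ps) = 1"
proof (induction ps rule: rev_induct)
  case Nil
  then show ?case by (simp add: f_0 chow_one_def wd_Nil id_def)
next
  case (snoc a qs)
  define ps where "ps = qs @ [a]"
  have p: "ispath ps" using snoc.prems ps_def by simp
  have i0: "ps ! 0 = i" using snoc.prems ps_def by simp
  have pq: "ispath qs" using ispath_take[OF p, of "length qs"] ps_def by simp
  have "qs \<noteq> [] \<longrightarrow> qs ! 0 = i" using i0 ps_def by (auto simp: nth_append)
  then have IH: "f i (length qs) (wd qs) = 1" using snoc.IH pq by blast
  define m where "m = length qs"
  define v where "v = wd qs"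
  define u where "u = wd ps"
  have a: "a < r" using ispath_set[OF p] ps_def by simp
  have vW: "v \<in> W" using wd_W ispath_set[OF pq] v_def by blast
  have uW: "u \<in> W" using wd_W ispath_set[OF p] u_def by blast
  have uv: "u = v \<circ> sr a" using u_def v_def ps_def wd_snoc by simp
  have b0: "psum ps = v (simple a)" using PC p ps_def v_def by simp
  have b0p: "psum ps \<in> pos" using path_pos[OF p] ps_def by simp
  have rb0: "refl r A (psum ps) \<circ> u = v"
  proof -
    have "refl r A (psum ps) \<circ> v = v \<circ> sr a" using W_conj'[OF vW] b0 by simp
    then have "refl r A (psum ps) \<circ> u = v \<circ> (sr a \<circ> sr a)" using uv by (metis comp_assoc)
    then show ?thesis using sr_invol[OF a] by simp
  qed
  have lv: "len v = m" using path_len[OF pq] v_def m_def by simp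
  have lu: "len u = Suc m" using path_len[OF p] u_def m_def ps_def by simp
  have b0T: "psum ps \<in> T u" using b0p rb0 lv lu unfolding T_def by simp
  have b0i: "psum ps i = 1" using path_coord[OF p i0, of "length ps"] ps_def by simp
  have key: "f i m (refl r A \<beta> \<circ> u) = 0" if bT: "\<beta> \<in> T u" and bne: "\<beta> \<noteq> psum ps" for \<beta>
  proof (rule ccontr)
    assume nz: "f i m (refl r A \<beta> \<circ> u) \<noteq> 0"
    define x where "x = refl r A \<beta> \<circ> u"
    have fx: "f i m x > 0" using nz f_nonneg x_def by (metis less_le)
    have Gx: "Gp i x" using F2[OF fx] .
    have xW: "x \<in> W" and lx: "len x = m" using f_supp[of i m x] nz x_def by auto
    have "\<beta> \<in> N u" using T_sub[OF uW] bT by blast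
    then obtain t where t: "t \<in> {1..length ps}" "\<beta> = psum (take t ps)" using path_N[OF p] u_def by blast
    have "t \<noteq> length ps" using bne t by auto
    then obtain t' where t': "t = Suc t'" "Suc t' < length ps" using t by (metis Suc_pred atLeastAtMost_iff le_neq_implies_less not_one_le_zero le0 not_less_eq_eq neq0_conv)
    define pp where "pp = take t' ps"
    define c where "c = ps ! t'"
    define b where "b = ps ! Suc t'"
    define q where "q = drop (Suc (Suc t')) ps"
    have dec: "ps = pp @ c # b # q" using path_decomp[OF t'(2)] pp_def c_def b_def q_def by simp
    have psr: "set ps \<subseteq> {..<r}" using ispath_set[OF p] .
    have c: "c < r" and b: "b < r" and ppr: "set pp \<subseteq> {..<r}" and qr: "set q \<subseteq> {..<r}"
      using psr dec by auto
    have ppW: "wd pp \<in> W" using wd_W ppr by blast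
    have tk: "take (Suc t') ps = pp @ [c]" using t'(2) pp_def c_def by (simp add: take_Suc_conv_app_nth)
    have "\<beta> = wd pp (simple c)" using PC[of pp c] ispath_take[OF p, of "Suc t'"] tk t t' by simp
    then have rb: "refl r A \<beta> \<circ> wd pp = wd pp \<circ> sr c" using W_conj'[OF ppW] by simp
    have ud: "u = wd pp \<circ> sr c \<circ> sr b \<circ> wd q" using u_def dec by (simp add: wd_append wd_Cons comp_assoc)
    have "x = wd pp \<circ> (sr c \<circ> sr c) \<circ> sr b \<circ> wd q" using x_def ud rb by (metis comp_assoc)
    then have xd: "x = wd pp \<circ> sr b \<circ> wd q" using sr_invol[OF c] by simp
    have comm: "\<forall>y\<in>set pp. y < r \<and> A y b = 0"
    proof
      fix y assume y: "y \<in> set pp"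
      then obtain s where s: "s < length pp" "y = pp ! s" by (metis in_set_conv_nth)
      have sl: "s < t'" using s pp_def t' by simp
      have "y = ps ! s" using s pp_def by simp
      moreover have "A (ps ! s) (ps ! Suc t') = 0" using ispath_far[OF p, of s "Suc t'"] sl t' by simp
      ultimately show "y < r \<and> A y b = 0" using ppr y b_def by auto
    qed
    have "sr b \<circ> x = (sr b \<circ> wd pp) \<circ> sr b \<circ> wd q" using xd by (simp add: comp_assoc)
    also have "\<dots> = wd pp \<circ> (sr b \<circ> sr b) \<circ> wd q" using wd_comm[OF b comm] by (simp add: comp_assoc)
    also have "\<dots> = wd (pp @ q)" using sr_invol[OF b] wd_append by simp
    finally have "len (sr b \<circ> x) \<le> length (pp @ q)" using len_le[of "pp @ q"] ppr qr by simp
    moreover have "length ps = length pp + length q + 2" by (subst dec) simp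
    then have "length (pp @ q) < m" using m_def ps_def by simp
    ultimately have "len (sr b \<circ> x) < len x" using lx by simp
    then have "simple b \<in> N x" using descent_left[OF xW b] by blast
    moreover have "b \<noteq> i"
    proof
      assume "b = i"
      then have "ps ! Suc t' = ps ! 0" using i0 b_def by simp
      then show False using nth_eq_iff_index_eq[OF ispath_distinct[OF p], of "Suc t'" 0] t'(2) by (metis Suc_lessD nat.distinct(1) zero_less_Suc order.strict_trans)
    qed
    ultimately show False using Gx b unfolding Gp_def by blast
  qed
  have fin: "finite (T u)" using T_fin[OF uW] .
  have "f i (Suc m) u = (\<Sum>\<beta>\<in>T u. \<beta> i * f i m (refl r A \<beta> \<circ> u))"
    using uW by (simp add: f_Suc Dmul_eq)
  also have "\<dots> = psum ps i * f i m (refl r A (psum ps) \<circ> u) + (\<Sum>\<beta>\<in>T u - {psum ps}. \<beta> i * f i m (refl r A \<beta> \<circ> u))"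
    using sum.remove[OF fin b0T] by simp
  also have "(\<Sum>\<beta>\<in>T u - {psum ps}. \<beta> i * f i m (refl r A \<beta> \<circ> u)) = 0"
    using key by (intro sum.neutral) auto
  finally have "f i (Suc m) u = 1" using b0i rb0 IH v_def m_def by simp
  then show ?case using u_def ps_def m_def by simp
qed

end


context cart begin

lemma cycle_contra:
  assumes p: "ispath is" and t: "t + 1 < length is" and j: "j < r" and jn: "j \<notin> set is"
    and At: "A (is ! t) j = -1" and Al: "A (last is) j = -1"
  shows False
proof -
  define ds where "ds = drop t is"
  have pd: "ispath ds" using ispath_drop[OF p] ds_def by simp
  have dsr: "set ds \<subseteq> {..<r}" using ispath_set[OF pd] .
  have ds_sub: "set ds \<subseteq> set is" using ds_def by (simp add: set_drop_subset)
  have dne: "ds \<noteq> []" using t ds_def by simp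
  have ds0: "ds = is ! t # drop (Suc t) is" using t ds_def by (simp add: Cons_nth_drop_Suc)
  define rest where "rest = drop (Suc t) is"
  have rne: "rest \<noteq> []" using t rest_def by simp
  have lr: "last rest = last is" using rest_def t by (simp add: last_drop)
  obtain mid where mid: "rest = mid @ [last is]" using rne lr by (metis append_butlast_last_id)
  have dsd: "ds = is ! t # mid @ [last is]" using ds0 mid rest_def by simp
  define \<gamma> where "\<gamma> = psum ds"
  have gB: "B \<gamma> \<gamma> = 2" using path_pos[OF pd dne] root_B pos_root \<gamma>_def by blast
  have terms: "A y j \<le> 0" if "y \<in> set ds" for y
  proof -
    have "y \<noteq> j" "y < r" using that jn ds_sub dsr by auto
    then show ?thesis using A_le0 j by blast
  qed
  have midnp: "(\<Sum>y\<leftarrow>mid. A y j) \<le> 0"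
    by (rule sum_list_nonpos_int) (use terms dsd in auto)
  have "B \<gamma> (simple j) = (\<Sum>y\<leftarrow>ds. A y j)" using B_psum_simple[OF dsr j] \<gamma>_def by simp
  also have "\<dots> = A (is ! t) j + (\<Sum>y\<leftarrow>mid. A y j) + A (last is) j" using dsd by simp
  finally have gj: "B \<gamma> (simple j) \<le> -2" using At Al midnp by simp
  define x where "x = (\<lambda>k. \<gamma> k + simple j k)"
  have "B x x = B \<gamma> \<gamma> + 2 * B \<gamma> (simple j) + B (simple j) (simple j)"
    unfolding x_def by (simp add: B_add1 B_add2 B_sym[of "simple j" \<gamma>])
  then have Bx: "B x x \<le> 0" using gB gj B_simple_self[OF j] by simp
  have Qx: "Q x" using psum_Q[OF dsr] simple_Q[OF j] \<gamma>_def unfolding x_def inQ_def by simp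
  have "x j = 1" using psum_notin[of j ds] jn ds_sub \<gamma>_def unfolding x_def by (auto simp: simple_def)
  then have "x \<noteq> (\<lambda>_. 0)" by (metis one_neq_zero)
  then show False using posdef[OF Qx] Bx by simp
qed

lemma Ext:
  assumes p: "ispath is" and i0: "is \<noteq> [] \<longrightarrow> is ! 0 = i" and j: "j < r"
    and vp: "wd is (simple j) \<in> pos"
    and Gw: "Gp i (wd is \<circ> sr j)"
    and ud: "\<forall>t<r. (wd is \<circ> sr j) (simple t) \<in> neg \<longrightarrow> t = j"
  shows "ispath (is @ [j]) \<and> (is @ [j]) ! 0 = i"
proof -
  define v where "v = wd is"
  define w where "w = v \<circ> sr j"
  define m where "m = length is"
  have vW: "v \<in> W" using wd_W ispath_set[OF p] v_def by blast
  have wW: "w \<in> W" using W_comp[OF vW W_sr[OF j]] w_def by simp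
  have lv: "len v = m" using path_len[OF p] v_def m_def by simp
  have lw: "len w = m + 1" using len_right_up[OF vW j] vp v_def w_def lv by simp
  have desc: "t = j" if t: "t < r" "len (w \<circ> sr t) < len w" for t
    using ud descent_right[OF wW t(1)] t v_def w_def by blast
  show ?thesis
  proof (cases "is = []")
    case True
    then have "v = id" using v_def wd_Nil by simp
    then have "N w = {simple j}" using N_right_up(1)[OF W_id j] N_id w_def simple_pos[OF j] by simp
    then have "j = i" using Gw w_def v_def j unfolding Gp_def by blast
    then show ?thesis using True ispath_single[OF j] by simp
  next
    case False
    obtain pp a where ppa: "is = pp @ [a]" using False by (metis rev_exhaust)
    have a: "a < r" using ispath_set[OF p] ppa by simp
    have ppr: "set pp \<subseteq> {..<r}" using ispath_set[OF p] ppa by simp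
    have la: "last is = a" using ppa by simp
    have vd: "v = wd pp \<circ> sr a" using v_def ppa wd_snoc by simp
    have mpp: "m = length pp + 1" using m_def ppa by simp
    have ja: "j \<noteq> a"
    proof
      assume "j = a"
      then have "w = wd pp \<circ> (sr a \<circ> sr a)" using w_def vd by (simp add: comp_assoc)
      then have "w = wd pp" using sr_invol[OF a] by simp
      then have "len w \<le> length pp" using len_le[OF ppr] by simp
      then show False using lw mpp by simp
    qed
    have Aaj: "A a j = -1"
    proof (rule ccontr)
      assume "A a j \<noteq> -1"
      then have A0: "A a j = 0" using A_off[OF a j] ja by auto
      have "w \<circ> sr a = wd pp \<circ> (sr a \<circ> sr j) \<circ> sr a" using w_def vd by (simp add: comp_assoc)
      also have "\<dots> = wd pp \<circ> sr j \<circ> (sr a \<circ> sr a)" using sr_comm[OF a j A0] by (simp add: comp_assoc)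
      also have "\<dots> = wd (pp @ [j])" using sr_invol[OF a] wd_snoc by simp
      finally have "len (w \<circ> sr a) \<le> length (pp @ [j])" using len_le[of "pp @ [j]"] ppr j by simp
      then have "len (w \<circ> sr a) < len w" using lw mpp by simp
      then show False using desc[OF a] ja by simp
    qed
    have jnot: "j \<notin> set is"
    proof
      assume "j \<in> set is"
      then obtain k where k: "k < m" "is ! k = j" using m_def by (metis in_set_conv_nth)
      have "k \<noteq> m - 1" using k ja ppa m_def by (auto simp: nth_append)
      then have km: "k + 1 < m" using k by simp
      have am: "is ! (m - 1) = a" using ppa m_def by simp
      have "\<not> (m - 1 > k + 1)"
      proof
        assume "m - 1 > k + 1"
        then have "A (is ! k) (is ! (m - 1)) = 0" using ispath_far[OF p, of k "m - 1"] k m_def by simp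
        then show False using k am Aaj A_sym[OF j a] by simp
      qed
      then have kk: "k + 2 = m" using km by simp
      obtain pp' where pp': "pp = pp' @ [j]"
      proof -
        have "pp ! k = j" using k ppa kk mpp by (simp add: nth_append)
        moreover have "pp = take k pp @ [pp ! k]" using kk mpp by (metis add_diff_cancel_right' butlast_conv_take append_butlast_last_id last_conv_nth length_0_conv length_butlast nat.simps(3) one_add_one plus_1_eq_Suc add_Suc_right add_0_right take_all_iff le_refl)
        ultimately show ?thesis using that by metis
      qed
      have pp'r: "set pp' \<subseteq> {..<r}" using ppr pp' by simp
      have "w = wd pp' \<circ> (sr j \<circ> sr a \<circ> sr j)" using w_def vd pp' wd_snoc by (simp add: comp_assoc)
      also have "\<dots> = wd pp' \<circ> (sr a \<circ> sr j \<circ> sr a)" using braid[OF j a] Aaj A_sym[OF j a] by simp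
      finally have "w \<circ> sr a = wd pp' \<circ> sr a \<circ> sr j \<circ> (sr a \<circ> sr a)" by (simp add: comp_assoc)
      then have "w \<circ> sr a = wd (pp' @ [a, j])" using sr_invol[OF a] wd_snoc wd_append by (simp add: wd_Cons wd_Nil comp_assoc)
      then have "len (w \<circ> sr a) \<le> length (pp' @ [a, j])" using len_le[of "pp' @ [a, j]"] pp'r a j by simp
      then have "len (w \<circ> sr a) < len w" using lw mpp pp' by simp
      then show False using desc[OF a] ja by simp
    qed
    have far: "A (is ! t) j = 0" if t: "t + 1 < length is" for t
    proof (rule ccontr)
      assume ne: "A (is ! t) j \<noteq> 0"
      have itr: "is ! t < r" using ispath_lt[OF p] t by simp
      have "is ! t \<noteq> j" using jnot t by (metis Suc_lessD add.commute nth_mem plus_1_eq_Suc)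
      then have "A (is ! t) j = -1" using A_off[OF itr j] ne by auto
      then show False using cycle_contra[OF p t j jnot] Aaj la by simp
    qed
    have "ispath (is @ [j])" by (rule ispath_snocI[OF p j]) (use Aaj la far in auto)
    moreover have "(is @ [j]) ! 0 = i" using i0 False by (simp add: nth_append)
    ultimately show ?thesis by blast
  qed
qed

end


context cart begin

lemma Pth_id: "Pth i id"
  unfolding Pth_def using ispath_Nil wd_Nil len_id by (intro exI[of _ "[]"]) auto

lemma E_path:
  "u \<in> W \<Longrightarrow> len u = n \<Longrightarrow> (\<forall>\<beta>\<in>N u. \<beta> i > 0) \<Longrightarrow>
   (\<forall>\<beta>\<in>N u. \<forall>\<gamma>\<in>N u. \<beta> \<noteq> \<gamma> \<longrightarrow> B \<beta> \<gamma> \<noteq> 0 \<and> B \<beta> \<gamma> \<noteq> -1) \<Longrightarrow> Pth i u"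
proof (induction n arbitrary: u)
  case 0
  then have "u = id" using len0 by blast
  then show ?case using Pth_id by metis
next
  case (Suc n)
  have uW: "u \<in> W" using Suc.prems by blast
  obtain j where j: "j < r" "u (simple j) \<in> neg" using exists_descent[OF uW] Suc.prems by auto
  define u' where "u' = u \<circ> sr j"
  have u'W: "u' \<in> W" using W_comp[OF uW W_sr[OF j(1)]] u'_def by simp
  have lu': "len u' = n" using len_right_down[OF uW j] Suc.prems u'_def by simp
  have Nu': "N u' \<subseteq> N u" using N_right_down(1)[OF uW j] u'_def by simp
  have "Pth i u'" using Suc.IH[OF u'W lu'] Suc.prems Nu' by blast
  then obtain xs where xs: "ispath xs" "length xs = n" "xs \<noteq> [] \<longrightarrow> xs ! 0 = i" "u' = wd xs"
    unfolding Pth_def using lu' by blast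
  have uu: "u = wd xs \<circ> sr j"
  proof -
    have "u' \<circ> sr j = u \<circ> (sr j \<circ> sr j)" using u'_def by (simp add: comp_assoc)
    then show ?thesis using sr_invol[OF j(1)] xs(4) by simp
  qed
  have vp: "wd xs (simple j) \<in> pos"
  proof -
    have "wd xs (simple j) = u (sr j (simple j))" using xs(4) u'_def by (metis comp_apply)
    also have "\<dots> = - u (simple j)" using sr_simple[OF j(1)] W_uminus[OF uW] by simp
    finally show ?thesis using j(2) neg_iff by simp
  qed
  have Gw: "Gp i (wd xs \<circ> sr j)"
    unfolding Gp_def
  proof (intro allI impI notI)
    fix k assume k: "k < r" "k \<noteq> i" "simple k \<in> N (wd xs \<circ> sr j)"
    then have "simple k i > 0" using uu Suc.prems(3) by metis
    then show False using k by (simp add: simple_def)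
  qed
  have ud: "\<forall>t<r. (wd xs \<circ> sr j) (simple t) \<in> neg \<longrightarrow> t = j"
  proof (intro allI impI)
    fix t assume t: "t < r" "(wd xs \<circ> sr j) (simple t) \<in> neg"
    then have tn: "u (simple t) \<in> neg" using uu by simp
    show "t = j"
    proof (rule ccontr)
      assume tj: "t \<noteq> j"
      have g1: "- u (simple j) \<in> N u" using N_right_down(2)[OF uW j] .
      have g2: "- u (simple t) \<in> N u" using N_right_down(2)[OF uW t(1) tn] .
      have ne: "- u (simple j) \<noteq> - u (simple t)"
      proof
        assume "- u (simple j) = - u (simple t)"
        then have "u (simple j) = u (simple t)" by (metis vneg_neg)
        then have "simple j = simple t" using W_inj'[OF uW] by blast
        then have "simple j j = simple t j" by simp
        then show False using tj by (simp add: simple_def)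
      qed
      have "B (- u (simple j)) (- u (simple t)) = A j t"
        using B_neg1 B_neg2 W_pres[OF uW] B_simple[OF j(1) t(1)] by simp
      moreover have "A j t = 0 \<or> A j t = -1" using A_off[OF j(1) t(1)] tj by auto
      ultimately show False using Suc.prems(4) g1 g2 ne by metis
    qed
  qed
  have "ispath (xs @ [j]) \<and> (xs @ [j]) ! 0 = i" using Ext[OF xs(1) xs(3) j(1) vp Gw ud] .
  moreover have "u = wd (xs @ [j])" using uu wd_snoc by simp
  ultimately show ?case unfolding Pth_def using xs(2) Suc.prems(2) by (intro exI[of _ "xs @ [j]"]) auto
qed

lemma f1_path:
  "u \<in> W \<Longrightarrow> len u = n \<Longrightarrow> f i n u = 1 \<Longrightarrow> Pth i u"
proof (induction n arbitrary: u)
  case 0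
  then have "u = id" using len0 by blast
  then show ?case using Pth_id by metis
next
  case (Suc n)
  have uW: "u \<in> W" using Suc.prems by blast
  define g where "g = (\<lambda>\<beta>. \<beta> i * f i n (refl r A \<beta> \<circ> u))"
  have sg: "sum g (T u) = 1" using Suc.prems uW unfolding g_def by (simp add: f_Suc Dmul_eq)
  have fin: "finite (T u)" using T_fin[OF uW] .
  have gnn: "\<forall>\<beta>\<in>T u. g \<beta> \<ge> 0" using f_nonneg pos_iff unfolding T_def g_def by auto
  obtain \<beta> where bT: "\<beta> \<in> T u" and gb: "g \<beta> > 0"
  proof (rule ccontr)
    assume "\<not> thesis"
    then have "\<forall>\<beta>\<in>T u. g \<beta> \<le> 0" using that by (meson not_less)
    then have "sum g (T u) \<le> 0" by (simp add: sum_nonpos)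
    then show False using sg by simp
  qed
  have "g \<beta> \<le> sum g (T u)" by (rule member_le_sum[OF bT]) (use gnn fin in auto)
  then have gb1: "g \<beta> = 1" using gb sg by simp
  have others: "g \<beta>' = 0" if b'T: "\<beta>' \<in> T u" and ne: "\<beta>' \<noteq> \<beta>" for \<beta>'
  proof -
    have "sum g {\<beta>, \<beta>'} \<le> sum g (T u)" by (rule sum_mono2[OF fin]) (use bT b'T gnn in auto)
    then have "g \<beta> + g \<beta>' \<le> 1" using ne sg by simp
    moreover have "g \<beta>' \<ge> 0" using gnn b'T by blast
    ultimately show ?thesis using gb1 by linarith
  qed
  define v where "v = refl r A \<beta> \<circ> u"
  have bi: "\<beta> i \<ge> 0" "f i n v \<ge> 0" using bT pos_iff f_nonneg unfolding T_def by auto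
  have "\<beta> i * f i n v = 1" using gb1 unfolding g_def v_def .
  then have fv: "f i n v = 1" using bi unfolding zmult_eq_1_iff by auto
  have vW: "v \<in> W" and lv: "len v = n" using f_supp[of i n v] fv by auto
  have "Pth i v" using Suc.IH[OF vW lv fv] .
  then obtain xs where xs: "ispath xs" "length xs = n" "xs \<noteq> [] \<longrightarrow> xs ! 0 = i" "v = wd xs"
    unfolding Pth_def using lv by blast
  have Gpu: "Gp i u" using F2[of i "Suc n" u] Suc.prems by simp
  have Gu: "G i u" using Gp_G[OF uW Gpu] .
  have D: "u \<circ> sr t = v" if t: "t < r" "u (simple t) \<in> neg" for t
  proof -
    define w' where "w' = u \<circ> sr t"
    have w'W: "w' \<in> W" using W_comp[OF uW W_sr[OF t(1)]] w'_def by simp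
    have lw': "len w' = n" using len_right_down[OF uW t] Suc.prems w'_def by simp
    have "N w' \<subseteq> N u" using N_right_down(1)[OF uW t] w'_def by simp
    then have Gw': "G i w'" using Gu unfolding G_def by blast
    have fw': "f i n w' > 0" using F3[OF w'W Gw' lw'] .
    define \<gamma> where "\<gamma> = - u (simple t)"
    have gN: "\<gamma> \<in> N u" using N_right_down(2)[OF uW t] \<gamma>_def by simp
    have gp: "\<gamma> \<in> pos" using gN N_sub by blast
    have gi: "\<gamma> i > 0" using gN Gu unfolding G_def by blast
    have rg: "refl r A \<gamma> \<circ> u = w'"
      using refl_uminus W_conj'[OF uW] \<gamma>_def w'_def by simp
    then have gT: "\<gamma> \<in> T u" using gp lw' Suc.prems unfolding T_def by simp
    have "g \<gamma> > 0" using gi fw' rg unfolding g_def by simp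
    then have "\<gamma> = \<beta>" using others gT by fastforce
    then show ?thesis using rg v_def w'_def by simp
  qed
  obtain j where j: "j < r" "u (simple j) \<in> neg" using exists_descent[OF uW] Suc.prems by auto
  have uu: "u = wd xs \<circ> sr j"
  proof -
    have "v \<circ> sr j = u \<circ> (sr j \<circ> sr j)" using D[OF j] by (metis comp_assoc)
    then show ?thesis using sr_invol[OF j(1)] xs(4) by simp
  qed
  have vp: "wd xs (simple j) \<in> pos"
  proof -
    have "wd xs (simple j) = u (sr j (simple j))" using xs(4) D[OF j] by (metis comp_apply)
    also have "\<dots> = - u (simple j)" using sr_simple[OF j(1)] W_uminus[OF uW] by simp
    finally show ?thesis using j(2) neg_iff by simp
  qed
  have Gw: "Gp i (wd xs \<circ> sr j)" using Gpu uu by simp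
  have ud: "\<forall>t<r. (wd xs \<circ> sr j) (simple t) \<in> neg \<longrightarrow> t = j"
  proof (intro allI impI)
    fix t assume t: "t < r" "(wd xs \<circ> sr j) (simple t) \<in> neg"
    then have tn: "u (simple t) \<in> neg" using uu by simp
    have "u \<circ> sr t = u \<circ> sr j" using D[OF t(1) tn] D[OF j] by simp
    then have "sr t x = sr j x" for x using W_inj'[OF uW] by (metis comp_apply)
    then have "sr t = sr j" by blast
    then show "t = j" using sr_inj t(1) j(1) by blast
  qed
  have "ispath (xs @ [j]) \<and> (xs @ [j]) ! 0 = i" using Ext[OF xs(1) xs(3) j(1) vp Gw ud] .
  moreover have "u = wd (xs @ [j])" using uu wd_snoc by simp
  ultimately show ?case unfolding Pth_def using xs(2) Suc.prems(2) by (intro exI[of _ "xs @ [j]"]) auto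
qed

end


lemma sum_e: "(i::nat) < r \<Longrightarrow> (\<Sum>j<r. (if j = i then n else 0)) = (n::nat)"
proof -
  assume i: "i < r"
  have "(\<Sum>j\<in>{..<r}. (if j = i then n else 0)) = (if i \<in> {..<r} then n else 0)"
    by (rule sum.delta) simp
  then show ?thesis using i by simp
qed

lemma supp_e_pos: "(i::nat) < r \<Longrightarrow> n > 0 \<Longrightarrow> supp_tuple r (\<lambda>j. if j = i then n else 0) = {i}"
  unfolding supp_tuple_def by auto

lemma supp_e_0: "supp_tuple r (\<lambda>j. if j = i then 0 else 0) = {}"
  unfolding supp_tuple_def by auto

lemma simple_inj: "simple a = simple b \<Longrightarrow> a = b"
  by (metis simple_def zero_neq_one)

context cart begin

lemma EC_of_path:
  assumes p: "ispath xs" and i0: "xs \<noteq> [] \<longrightarrow> xs ! 0 = i" and i: "i < r"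
  shows "excessive_cluster r A (N (wd xs)) (\<lambda>j. if j = i then length xs else 0)"
proof -
  define n where "n = length xs"
  define S where "S = N (wd xs)"
  have uW: "wd xs \<in> W" using wd_W ispath_set[OF p] by blast
  have cS: "card S = n" using len_card[OF uW] path_len[OF p] S_def n_def by simp
  have fS: "finite S" using N_finite[OF uW] S_def by simp
  have c1: "\<forall>\<beta>\<in>S. \<beta> i = 1" using path_props(1)[OF p] i0 S_def by auto
  have c2: "\<forall>\<beta>\<in>S. \<forall>\<gamma>\<in>S. \<beta> \<noteq> \<gamma> \<longrightarrow> B \<beta> \<gamma> = 1" using path_props(2)[OF p] i0 S_def by auto
  have c3: "\<forall>\<beta>\<in>S. B \<beta> \<beta> = 2" using S_def N_sub root_B pos_root by blast
  show ?thesis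
  proof (cases "n = 0")
    case True
    then have "xs = []" using n_def by simp
    then have S0: "N (wd xs) = {}" using N_id wd_Nil by simp
    have st0: "supp_tuple r (\<lambda>j. if j = i then length xs else 0) = {}"
      unfolding supp_tuple_def using \<open>xs = []\<close> by simp
    show ?thesis unfolding excessive_cluster_def excessive_def is_cluster_def R_set_def S0 st0
      using \<open>xs = []\<close> by simp
  next
    case False
    then have st: "supp_tuple r (\<lambda>j. if j = i then n else 0) = {i}" using supp_e_pos[OF i] by simp
    have R: "R_set {i} S = S" using c1 unfolding R_set_def supp_def by auto
    have "excessive r S (\<lambda>j. if j = i then n else 0)"
      unfolding excessive_def st R using cS sum_e[OF i] by auto
    moreover have "is_cluster r A {i} S"
      unfolding is_cluster_def
    proof (intro conjI ballI impI)
      fix \<alpha> j assume "\<alpha> \<in> S" "j \<in> {i}" then show "\<alpha> j \<le> 1" using c1 by auto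
    next
      fix \<alpha> \<beta> assume "\<alpha> \<in> S" "\<beta> \<in> S" "\<alpha> \<noteq> \<beta>" then show "B \<alpha> \<beta> \<noteq> -1" using c2 by simp
    next
      fix \<alpha> \<beta> assume "\<alpha> \<in> S" "\<beta> \<in> S" "B \<alpha> \<beta> = 0"
      then show "supp \<alpha> \<inter> supp \<beta> \<inter> {i} = {}" using c2 c3 by (cases "\<alpha> = \<beta>") auto
    qed
    ultimately have "excessive_cluster r A S (\<lambda>j. if j = i then n else 0)"
      unfolding excessive_cluster_def st by simp
    then show ?thesis unfolding S_def n_def .
  qed
qed

lemma EC_R:
  assumes w: "w \<in> W" and i: "i < r" and n: "len w > 0"
    and ex: "card (R_set {i} (N w)) = len w"
  shows "R_set {i} (N w) = N w"
proof -
  have "card (N w) = len w" using len_card[OF w] by simp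
  moreover have "R_set {i} (N w) \<subseteq> N w" unfolding R_set_def by blast
  ultimately show ?thesis using ex N_finite[OF w] by (metis card_subset_eq)
qed

lemma EC_path:
  assumes w: "w \<in> W" and i: "i < r"
    and ec: "excessive_cluster r A (N w) (\<lambda>j. if j = i then len w else 0)"
  shows "Pth i w"
proof (cases "len w = 0")
  case True
  then have "w = id" using len0 w by blast
  then show ?thesis using Pth_id by metis
next
  case False
  then have n: "len w > 0" by simp
  have st: "supp_tuple r (\<lambda>j. if j = i then len w else 0) = {i}" using supp_e_pos[OF i n] .
  have "card (R_set {i} (N w)) = len w" using ec sum_e[OF i] unfolding excessive_cluster_def excessive_def st by simp
  then have R: "R_set {i} (N w) = N w" using EC_R[OF w i n] by blast
  have pi: "\<forall>\<beta>\<in>N w. \<beta> i > 0"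
  proof
    fix \<beta> assume b: "\<beta> \<in> N w"
    then have "\<beta> i \<noteq> 0" using R unfolding R_set_def supp_def by blast
    moreover have "\<beta> i \<ge> 0" using b N_sub pos_iff by blast
    ultimately show "\<beta> i > 0" by simp
  qed
  have cl: "is_cluster r A {i} (N w)" using ec unfolding excessive_cluster_def st by simp
  have "\<forall>\<beta>\<in>N w. \<forall>\<gamma>\<in>N w. \<beta> \<noteq> \<gamma> \<longrightarrow> B \<beta> \<gamma> \<noteq> 0 \<and> B \<beta> \<gamma> \<noteq> -1"
  proof (intro ballI impI conjI)
    fix \<beta> \<gamma> assume b: "\<beta> \<in> N w" and g: "\<gamma> \<in> N w" and ne: "\<beta> \<noteq> \<gamma>"
    show "B \<beta> \<gamma> \<noteq> -1" using cl b g ne unfolding is_cluster_def by blast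
    show "B \<beta> \<gamma> \<noteq> 0"
    proof
      assume "B \<beta> \<gamma> = 0"
      then have "supp \<beta> \<inter> supp \<gamma> \<inter> {i} = {}" using cl b g unfolding is_cluster_def by blast
      moreover have "i \<in> supp \<beta>" "i \<in> supp \<gamma>" using pi b g unfolding supp_def by auto
      ultimately show False by blast
    qed
  qed
  then show ?thesis using E_path[OF w refl pi] by blast
qed

lemma bs_of_1: "xs \<noteq> [] \<Longrightarrow> bs_of xs ! 1 = simple (xs ! 0)"
proof -
  assume ne: "xs \<noteq> []"
  then obtain a ys where xs: "xs = a # ys" by (cases xs) auto
  have "bs_of xs ! 1 = psum (take 1 xs)" using bs_of_nth[of 1 xs] xs by simp
  also have "\<dots> = simple a" using xs psum_single by simp
  finally show ?thesis using xs by simp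
qed

lemma bs_of_set: "ispath xs \<Longrightarrow> {bs_of xs ! j | j. j \<in> {1..length xs}} = N (wd xs)"
proof -
  assume p: "ispath xs"
  have h: "bs_of xs ! j = psum (take j xs)" if "j \<in> {1..length xs}" for j
    using bs_of_nth[of j xs] that by simp
  have "{bs_of xs ! j | j. j \<in> {1..length xs}} = {psum (take j xs) | j. j \<in> {1..length xs}}"
  proof (intro set_eqI iffI)
    fix x assume "x \<in> {bs_of xs ! j | j. j \<in> {1..length xs}}"
    then obtain j where "j \<in> {1..length xs}" "x = bs_of xs ! j" by blast
    then show "x \<in> {psum (take j xs) | j. j \<in> {1..length xs}}" using h by blast
  next
    fix x assume "x \<in> {psum (take j xs) | j. j \<in> {1..length xs}}"
    then obtain j where j: "j \<in> {1..length xs}" "x = psum (take j xs)" by blast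
    then have "x = bs_of xs ! j" using h[OF j(1)] by simp
    then show "x \<in> {bs_of xs ! j | j. j \<in> {1..length xs}}" using j(1) by blast
  qed
  then show ?thesis using path_N[OF p] by simp
qed

lemma bs_of_eq:
  assumes p: "ispath xs" and p': "ispath xs'" and l: "length xs = length xs'"
    and S: "N (wd xs) = N (wd xs')"
  shows "bs_of xs = bs_of xs'"
proof (rule nth_equalityI)
  show "length (bs_of xs) = length (bs_of xs')" using l bs_of_length by simp
next
  fix k assume k: "k < length (bs_of xs)"
  then have kl: "k \<le> length xs" using bs_of_length by simp
  show "bs_of xs ! k = bs_of xs' ! k"
  proof (cases "k = 0")
    case True then show ?thesis using bs_of_nth[of 0] by simp
  next
    case False
    then have "psum (take k xs) \<in> N (wd xs)" using path_N[OF p] kl by auto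
    then obtain t where t: "t \<in> {1..length xs'}" "psum (take k xs) = psum (take t xs')"
      using S path_N[OF p'] by auto
    have s1: "set (take k xs) \<subseteq> {..<r}" using ispath_set[OF ispath_take[OF p]] .
    have s2: "set (take t xs') \<subseteq> {..<r}" using ispath_set[OF ispath_take[OF p']] .
    have tl: "t \<le> length xs'" using t(1) by simp
    have "(\<Sum>j<r. psum (take k xs) j) = int k"
      using psum_height'[OF s1] kl by simp
    moreover have "(\<Sum>j<r. psum (take t xs') j) = int t"
      using psum_height'[OF s2] tl by simp
    ultimately have "k = t" using t by simp
    then show ?thesis using bs_of_nth[of k xs] bs_of_nth[of k xs'] kl l t by simp
  qed
qed

end

theorem mainTheorem9:
  fixes r :: nat and A :: "nat \<Rightarrow> nat \<Rightarrow> int" and w :: weyl and i :: nat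
  assumes cartan: "simply_laced_cartan r A"
    and w: "w \<in> weyl_group r A"
    and i: "i < r"
  defines "n \<equiv> wlen r A w"
  defines "e \<equiv> (\<lambda>j. if j = i then n else 0)"
  defines "P4 \<equiv> (\<lambda>bs. path_originating r A bs \<and> length bs = n + 1 \<and>
                   (n > 0 \<longrightarrow> bs ! 1 = simple i) \<and>
                   inv_set r A w = {bs ! j | j. j \<in> {1..n}})"
  defines "P5 \<equiv> (\<lambda>bs. path_originating r A bs \<and> length bs = n + 1 \<and>
                   (n > 0 \<longrightarrow> bs ! 1 = simple i) \<and>
                   w = refl_prod r A bs)"
  shows "(Ccoef r A w e = 1 \<longleftrightarrow> excessive_cluster r A (inv_set r A w) e)
       \<and> (excessive_cluster r A (inv_set r A w) e \<longleftrightarrow>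
            A_config r A (inv_set r A w) e \<and> exc_clusterizable r A (inv_set r A w) e)
       \<and> ((A_config r A (inv_set r A w) e \<and> exc_clusterizable r A (inv_set r A w) e)
            \<longleftrightarrow> (\<exists>bs. P4 bs))
       \<and> ((\<exists>bs. P4 bs) \<longleftrightarrow> (\<exists>bs. P5 bs))
       \<and> (\<forall>bs bs'. (P4 bs \<or> P5 bs) \<and> (P4 bs' \<or> P5 bs') \<longrightarrow> bs = bs')"
proof -
  interpret cart r A by unfold_locales (rule cartan)
  have e_eq: "e = (\<lambda>j. if j = i then n else 0)" by (simp add: e_def)
  have n_eq: "n = len w" by (simp add: n_def)
  define S where "S = inv_set r A w"
  have cS: "card S = n" using len_card[OF w] S_def n_eq by simp
  have fS: "finite S" using N_finite[OF w] S_def by simp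
  have se: "(\<Sum>j<r. e j) = n" using sum_e[OF i] e_eq by simp
  have PthD: "\<exists>xs. ispath xs \<and> length xs = n \<and> (xs \<noteq> [] \<longrightarrow> xs ! 0 = i) \<and> w = wd xs" if "Pth i w"
    using that unfolding Pth_def n_eq by blast
  have PthI: "Pth i w" if "ispath xs" "length xs = n" "xs \<noteq> [] \<longrightarrow> xs ! 0 = i" "w = wd xs" for xs
    using that unfolding Pth_def n_eq by blast
  have C1: "Ccoef r A w e = 1 \<longleftrightarrow> Pth i w"
  proof -
    have "Ccoef r A w e = f i n w" unfolding e_eq using Ccoef_f[OF i] .
    moreover have "f i n w = 1 \<longleftrightarrow> Pth i w"
    proof
      assume "f i n w = 1" then show "Pth i w" using f1_path[OF w] n_eq by blast
    next
      assume "Pth i w"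
      then obtain xs where "ispath xs" "length xs = n" "xs \<noteq> [] \<longrightarrow> xs ! 0 = i" "w = wd xs" using PthD by blast
      then show "f i n w = 1" using f_path by blast
    qed
    ultimately show ?thesis by simp
  qed
  have C2: "excessive_cluster r A S e \<longleftrightarrow> Pth i w"
  proof
    assume "excessive_cluster r A S e"
    then have "excessive_cluster r A (N w) (\<lambda>j. if j = i then len w else 0)" unfolding S_def e_eq n_eq .
    then show "Pth i w" using EC_path[OF w i] by blast
  next
    assume "Pth i w"
    then obtain xs where "ispath xs" "length xs = n" "xs \<noteq> [] \<longrightarrow> xs ! 0 = i" "w = wd xs" using PthD by blast
    then show "excessive_cluster r A S e" using EC_of_path[OF _ _ i] S_def e_eq by blast
  qed
  have C3: "excessive_cluster r A S e \<longleftrightarrow> A_config r A S e \<and> exc_clusterizable r A S e"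
  proof
    assume ec: "excessive_cluster r A S e"
    have ac: "A_config r A S e" unfolding A_config_def using N_sub S_def cS se by simp
    have "exc_clusterizable r A S e"
    proof (cases "n = 0")
      case True
      then have "S = {}" using cS fS by simp
      moreover have "\<forall>j<r. e j = 0" using True e_eq by simp
      ultimately show ?thesis using exc_clusterizable.empty by simp
    next
      case False
      then have np: "n > 0" by simp
      have st: "supp_tuple r e = {i}" using supp_e_pos[OF i np] e_eq by simp
      have ke: "(\<lambda>j. if j \<in> {i} then e j else 0) = e" using e_eq by auto
      have R: "R_set {i} S = S" using EC_R[OF w i] ec np se S_def n_eq
        unfolding excessive_cluster_def excessive_def st by simp
      have Sne: "S \<noteq> {}" using cS np by auto
      have emp: "exc_clusterizable r A (S - R_set {i} S) (\<lambda>j. e j - e j)"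
        using R exc_clusterizable.empty[where r=r and A=A and n="\<lambda>j. e j - e j"] by simp
      show ?thesis
        by (rule exc_clusterizable.step[where r=r and A=A and S=S and I="{i}" and n=e and k=e]) (use Sne st ke R cS se ec emp in auto)
    qed
    then show "A_config r A S e \<and> exc_clusterizable r A S e" using ac by blast
  next
    assume h: "A_config r A S e \<and> exc_clusterizable r A S e"
    then have cl: "exc_clusterizable r A S e" by blast
    from cl show "excessive_cluster r A S e"
    proof (cases rule: exc_clusterizable.cases)
      case empty
      then have "n = 0" using cS by simp
      then have "w = id" using len0[OF w] n_eq by simp
      then have "Pth i w" using Pth_id by metis
      then show ?thesis using C2 by blast
    next
      case (step I k)
      have "card S > 0" using step(1) fS card_gt_0_iff by blast
      then have np: "n > 0" using cS by simp
      have st: "supp_tuple r e = {i}" using supp_e_pos[OF i np] e_eq by simp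
      have I: "I = {i}" using step(2,3) st by auto
      have ke: "k = e" using step(4) I e_eq by auto
      have R: "R_set {i} S = S" using EC_R[OF w i] step(5) I ke se np S_def n_eq by simp
      show ?thesis using step(6) I ke R by simp
    qed
  qed
  have C4: "(\<exists>bs. P4 bs) \<longleftrightarrow> Pth i w"
  proof
    assume "\<exists>bs. P4 bs"
    then obtain bs where b: "path_originating r A bs" "length bs = n + 1" "n > 0 \<longrightarrow> bs ! 1 = simple i"
        "S = {bs ! j | j. j \<in> {1..n}}" unfolding P4_def S_def by blast
    obtain xs where xs: "ispath xs" "bs = bs_of xs" using path_originating_ex[OF b(1)] by blast
    have lx: "length xs = n" using b(2) xs(2) bs_of_length by simp
    have x0: "xs \<noteq> [] \<longrightarrow> xs ! 0 = i" using b(3) bs_of_1 xs(2) lx simple_inj by fastforce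
    have SN: "S = N (wd xs)" using b(4) bs_of_set[OF xs(1)] xs(2) lx by simp
    have "excessive_cluster r A (N (wd xs)) (\<lambda>j. if j = i then length xs else 0)" using EC_of_path[OF xs(1) x0 i] .
    then have "excessive_cluster r A S e" unfolding SN e_eq lx .
    then show "Pth i w" using C2 by blast
  next
    assume "Pth i w"
    then obtain xs where xs: "ispath xs" "length xs = n" "xs \<noteq> [] \<longrightarrow> xs ! 0 = i" "w = wd xs" using PthD by blast
    have "P4 (bs_of xs)" unfolding P4_def
      using path_originating_bs_of[OF xs(1)] bs_of_length xs bs_of_1 bs_of_set[OF xs(1)] by auto
    then show "\<exists>bs. P4 bs" by blast
  qed
  have C5: "(\<exists>bs. P5 bs) \<longleftrightarrow> Pth i w"
  proof
    assume "\<exists>bs. P5 bs"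
    then obtain bs where b: "path_originating r A bs" "length bs = n + 1" "n > 0 \<longrightarrow> bs ! 1 = simple i"
        "w = refl_prod r A bs" unfolding P5_def by blast
    obtain xs where xs: "ispath xs" "bs = bs_of xs" using path_originating_ex[OF b(1)] by blast
    have lx: "length xs = n" using b(2) xs(2) bs_of_length by simp
    have x0: "xs \<noteq> [] \<longrightarrow> xs ! 0 = i" using b(3) bs_of_1 xs(2) lx simple_inj by fastforce
    have "w = wd xs" using b(4) xs refl_prod_path by simp
    then show "Pth i w" using PthI xs(1) lx x0 by blast
  next
    assume "Pth i w"
    then obtain xs where xs: "ispath xs" "length xs = n" "xs \<noteq> [] \<longrightarrow> xs ! 0 = i" "w = wd xs" using PthD by blast
    have "P5 (bs_of xs)" unfolding P5_def
      using path_originating_bs_of[OF xs(1)] bs_of_length xs bs_of_1 refl_prod_path[OF xs(1)] by auto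
    then show "\<exists>bs. P5 bs" by blast
  qed
  have U0: "\<exists>xs. ispath xs \<and> bs = bs_of xs \<and> length xs = n \<and> N (wd xs) = S" if "P4 bs \<or> P5 bs" for bs
  proof -
    have po: "path_originating r A bs" and lb: "length bs = n + 1" using that unfolding P4_def P5_def by auto
    obtain xs where xs: "ispath xs" "bs = bs_of xs" using path_originating_ex[OF po] by blast
    have lx: "length xs = n" using lb xs(2) bs_of_length by simp
    have "N (wd xs) = S"
    proof (cases "P4 bs")
      case True
      then have "S = {bs ! j | j. j \<in> {1..n}}" unfolding P4_def S_def by blast
      then show ?thesis using bs_of_set[OF xs(1)] xs(2) lx by simp
    next
      case False
      then have "w = refl_prod r A bs" using that unfolding P5_def by blast
      then show ?thesis using refl_prod_path[OF xs(1)] xs(2) S_def by simp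
    qed
    then show ?thesis using xs lx by blast
  qed
  have U: "\<forall>bs bs'. (P4 bs \<or> P5 bs) \<and> (P4 bs' \<or> P5 bs') \<longrightarrow> bs = bs'"
  proof (intro allI impI)
    fix bs bs' assume h: "(P4 bs \<or> P5 bs) \<and> (P4 bs' \<or> P5 bs')"
    obtain xs where xs: "ispath xs" "bs = bs_of xs" "length xs = n" "N (wd xs) = S" using U0 h by blast
    obtain xs' where xs': "ispath xs'" "bs' = bs_of xs'" "length xs' = n" "N (wd xs') = S" using U0 h by blast
    show "bs = bs'" using bs_of_eq[OF xs(1) xs'(1)] xs xs' by simp
  qed
  show ?thesis using C1 C2 C3 C4 C5 U S_def by blast
qed


end
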